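(* Let $M$ be the monoid presented by the rewriting system over $A=\{a,b,c\}$ with rules $cbab\to cbcb$, $cbbb\to cbcb$, $cbca\to cacb$, $cbaa\to cbca$, $cbba\to cbca$, $caab\to cacb$, $cabb\to cacb$, $caaa\to caca$, $caba\to caca$. Then this rewriting system is complete (noetherian and confluent), so $M$ is FCRS (and hence FDT); moreover $M$ is automatic but not biautomatic.
   Context: A monoid is FCRS if it admits a presentation by a finite complete string rewriting system; FDT means finite derivation type (in Squier's sense). Automatic/biautomatic: for a finite generating alphabet $A$ of $M$ and regular $L\subseteq A^*$ mapping onto $M$, set $L_a=\{(u,v)\in L^2: ua=_Mv\}$, ${}_aL=\{(u,v)\in L^2: au=_Mv\}$ ($a\in A\cup\{\varepsilon\}$); $\delta_R$ ($\delta_L$) converts a pair of words into a word over pairs of letters by padding the shorter word at the end (beginning) with a new symbol $\$$. $M$ is automatic if for some such $(A,L)$ all $L_a\delta_R$ are regular; biautomatic if for some such $(A,L)$ all $L_a\delta_R,{}_aL\delta_R,L_a\delta_L,{}_aL\delta_L$ are regular. *)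

theory Defs
  imports Main
begin

definition rstep :: "('x list \<times> 'x list) set \<Rightarrow> ('x list \<times> 'x list) set" where
  "rstep R = {(x @ l @ y, x @ r @ y) | x l r y. (l, r) \<in> R}"

definition noetherian :: "('x list \<times> 'x list) set \<Rightarrow> bool" where
  "noetherian R \<longleftrightarrow> wf ((rstep R)\<inverse>)"

definition confluent :: "('x list \<times> 'x list) set \<Rightarrow> bool" where
  "confluent R \<longleftrightarrow> (\<forall>u v w. (u, v) \<in> (rstep R)\<^sup>* \<and> (u, w) \<in> (rstep R)\<^sup>* \<longrightarrow>
      (\<exists>z. (v, z) \<in> (rstep R)\<^sup>* \<and> (w, z) \<in> (rstep R)\<^sup>*))"

definition complete_srs :: "('x list \<times> 'x list) set \<Rightarrow> bool" where
  "complete_srs R \<longleftrightarrow> noetherian R \<and> confluent R"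

text \<open>The Thue congruence: equality in the presented monoid.\<close>
definition congr :: "('x list \<times> 'x list) set \<Rightarrow> ('x list \<times> 'x list) set" where
  "congr R = (rstep R \<union> (rstep R)\<inverse>)\<^sup>*"

definition ev :: "('b \<Rightarrow> 'x list) \<Rightarrow> 'b list \<Rightarrow> 'x list" where
  "ev f u = concat (map f u)"

text \<open>The monoid \<open>\<langle>X | R\<rangle>\<close> is isomorphic to the monoid \<open>\<langle>A | S\<rangle>\<close>: witnessed by
  a homomorphism \<open>X\<^sup>* \<rightarrow> A\<^sup>*\<close> (given on letters by f) that induces an injective
  and surjective map between the presented monoids.\<close>
definition presents_same :: "'y set \<Rightarrow> ('y list \<times> 'y list) set \<Rightarrow> 'x set \<Rightarrow> ('x list \<times> 'x list) set \<Rightarrow> bool" where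
  "presents_same X R A S \<longleftrightarrow> (\<exists>f g.
      (\<forall>y\<in>X. f y \<in> lists A) \<and> (\<forall>z\<in>A. g z \<in> lists X) \<and>
      (\<forall>u\<in>lists X. \<forall>v\<in>lists X. (u, v) \<in> congr R \<longleftrightarrow> (ev f u, ev f v) \<in> congr S) \<and>
      (\<forall>z\<in>A. (ev f (g z), [z]) \<in> congr S))"

text \<open>A finite presentation (over a finite alphabet of naturals, which is no loss of generality).\<close>
definition fin_pres :: "nat set \<Rightarrow> (nat list \<times> nat list) set \<Rightarrow> bool" where
  "fin_pres X R \<longleftrightarrow> finite X \<and> finite R \<and> R \<subseteq> lists X \<times> lists X"

definition FCRS :: "'x set \<Rightarrow> ('x list \<times> 'x list) set \<Rightarrow> bool" where
  "FCRS A S \<longleftrightarrow> (\<exists>X R. fin_pres X R \<and> complete_srs R \<and> presents_same X R A S)"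

text \<open>An edge of the derivation graph: (x, rule, direction, y); positive direction goes
  from x l y to x r y, negative direction the reverse.\<close>
type_synonym 'x edge = "'x list \<times> ('x list \<times> 'x list) \<times> bool \<times> 'x list"
type_synonym 'x dpath = "'x list \<times> 'x edge list"

fun esrc :: "'x edge \<Rightarrow> 'x list" where
  "esrc (x, (l, r), d, y) = (if d then x @ l @ y else x @ r @ y)"

fun etgt :: "'x edge \<Rightarrow> 'x list" where
  "etgt (x, (l, r), d, y) = (if d then x @ r @ y else x @ l @ y)"

fun einv :: "'x edge \<Rightarrow> 'x edge" where
  "einv (x, \<rho>, d, y) = (x, \<rho>, \<not> d, y)"

fun ectx :: "'x list \<Rightarrow> 'x edge \<Rightarrow> 'x list \<Rightarrow> 'x edge" where
  "ectx u (x, \<rho>, d, y) v = (u @ x, \<rho>, d, y @ v)"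

fun chain :: "'x list \<Rightarrow> 'x edge list \<Rightarrow> bool" where
  "chain w [] = True"
| "chain w (e # es) = (esrc e = w \<and> chain (etgt e) es)"

fun ptgt :: "'x list \<Rightarrow> 'x edge list \<Rightarrow> 'x list" where
  "ptgt w [] = w"
| "ptgt w (e # es) = ptgt (etgt e) es"

definition dedges :: "'x set \<Rightarrow> ('x list \<times> 'x list) set \<Rightarrow> 'x edge set" where
  "dedges X R = {(x, \<rho>, d, y). \<rho> \<in> R \<and> x \<in> lists X \<and> y \<in> lists X}"

definition dpaths :: "'x set \<Rightarrow> ('x list \<times> 'x list) set \<Rightarrow> 'x dpath set" where
  "dpaths X R = {(w, es). w \<in> lists X \<and> set es \<subseteq> dedges X R \<and> chain w es}"

definition pstart :: "'x dpath \<Rightarrow> 'x list" where "pstart p = fst p"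
definition pend :: "'x dpath \<Rightarrow> 'x list" where "pend p = ptgt (fst p) (snd p)"

definition parallel :: "'x dpath \<Rightarrow> 'x dpath \<Rightarrow> bool" where
  "parallel p q \<longleftrightarrow> pstart p = pstart q \<and> pend p = pend q"

definition pcomp :: "'x dpath \<Rightarrow> 'x dpath \<Rightarrow> 'x dpath" where
  "pcomp p q = (fst p, snd p @ snd q)"

definition pinv :: "'x dpath \<Rightarrow> 'x dpath" where
  "pinv p = (pend p, rev (map einv (snd p)))"

definition pctx :: "'x list \<Rightarrow> 'x dpath \<Rightarrow> 'x list \<Rightarrow> 'x dpath" where
  "pctx u p v = (u @ fst p @ v, map (\<lambda>e. ectx u e v) (snd p))"

inductive_set htpy :: "'x set \<Rightarrow> ('x list \<times> 'x list) set \<Rightarrow> ('x dpath \<times> 'x dpath) set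
    \<Rightarrow> ('x dpath \<times> 'x dpath) set"
  for X R Bs where
  base: "(p, q) \<in> Bs \<Longrightarrow> (p, q) \<in> htpy X R Bs"
| refl: "p \<in> dpaths X R \<Longrightarrow> (p, p) \<in> htpy X R Bs"
| sym: "(p, q) \<in> htpy X R Bs \<Longrightarrow> (q, p) \<in> htpy X R Bs"
| trans: "(p, q) \<in> htpy X R Bs \<Longrightarrow> (q, s) \<in> htpy X R Bs \<Longrightarrow> (p, s) \<in> htpy X R Bs"
| ctx: "(p, q) \<in> htpy X R Bs \<Longrightarrow> u \<in> lists X \<Longrightarrow> v \<in> lists X \<Longrightarrow>
         (pctx u p v, pctx u q v) \<in> htpy X R Bs"
| comp: "(p, q) \<in> htpy X R Bs \<Longrightarrow> r \<in> dpaths X R \<Longrightarrow> s \<in> dpaths X R \<Longrightarrow>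
         pend r = pstart p \<Longrightarrow> pstart s = pend p \<Longrightarrow>
         (pcomp (pcomp r p) s, pcomp (pcomp r q) s) \<in> htpy X R Bs"
| inv: "p \<in> dpaths X R \<Longrightarrow> (pcomp p (pinv p), (pstart p, [])) \<in> htpy X R Bs"
| indep: "e1 \<in> dedges X R \<Longrightarrow> e2 \<in> dedges X R \<Longrightarrow>
         ((esrc e1 @ esrc e2, [ectx [] e1 (esrc e2), ectx (etgt e1) e2 []]),
          (esrc e1 @ esrc e2, [ectx (esrc e1) e2 [], ectx [] e1 (etgt e2)])) \<in> htpy X R Bs"

definition FDT_pres :: "'x set \<Rightarrow> ('x list \<times> 'x list) set \<Rightarrow> bool" where
  "FDT_pres X R \<longleftrightarrow> (\<exists>Bs. finite Bs \<and>
      (\<forall>(p, q)\<in>Bs. p \<in> dpaths X R \<and> q \<in> dpaths X R \<and> parallel p q) \<and>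
      (\<forall>p\<in>dpaths X R. \<forall>q\<in>dpaths X R. parallel p q \<longrightarrow> (p, q) \<in> htpy X R Bs))"

definition FDT :: "'x set \<Rightarrow> ('x list \<times> 'x list) set \<Rightarrow> bool" where
  "FDT A S \<longleftrightarrow> (\<exists>X R. fin_pres X R \<and> FDT_pres X R \<and> presents_same X R A S)"

definition regular :: "'s list set \<Rightarrow> bool" where
  "regular L \<longleftrightarrow> (\<exists>(Q :: nat set) q0 \<delta> F. finite Q \<and> q0 \<in> Q \<and>
      (\<forall>q\<in>Q. \<forall>s. \<delta> q s \<in> Q) \<and> F \<subseteq> Q \<and> L = {w. foldl \<delta> q0 w \<in> F})"

text \<open>Padding; None plays the role of the padding symbol \$.\<close>
definition deltaR :: "'b list \<Rightarrow> 'b list \<Rightarrow> ('b option \<times> 'b option) list" where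
  "deltaR u v = (let n = max (length u) (length v) in
     zip (map Some u @ replicate (n - length u) None) (map Some v @ replicate (n - length v) None))"

definition deltaL :: "'b list \<Rightarrow> 'b list \<Rightarrow> ('b option \<times> 'b option) list" where
  "deltaL u v = (let n = max (length u) (length v) in
     zip (replicate (n - length u) None @ map Some u) (replicate (n - length v) None @ map Some v))"

text \<open>For a generating alphabet B with letters interpreted by \<phi> (word over A) and g \<in> B \<union> {\<epsilon>}
  (encoded as option): the relations \<open>L_g\<close> and \<open>\<^sub>gL\<close>.\<close>
definition Lright :: "('x list \<times> 'x list) set \<Rightarrow> (nat \<Rightarrow> 'x list) \<Rightarrow> nat list set \<Rightarrow> nat option
    \<Rightarrow> (nat list \<times> nat list) set" where
  "Lright S \<phi> L g = {(u, v). u \<in> L \<and> v \<in> L \<and>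
      (ev \<phi> u @ (case g of None \<Rightarrow> [] | Some h \<Rightarrow> \<phi> h), ev \<phi> v) \<in> congr S}"

definition Lleft :: "('x list \<times> 'x list) set \<Rightarrow> (nat \<Rightarrow> 'x list) \<Rightarrow> nat list set \<Rightarrow> nat option
    \<Rightarrow> (nat list \<times> nat list) set" where
  "Lleft S \<phi> L g = {(u, v). u \<in> L \<and> v \<in> L \<and>
      ((case g of None \<Rightarrow> [] | Some h \<Rightarrow> \<phi> h) @ ev \<phi> u, ev \<phi> v) \<in> congr S}"

text \<open>(B, \<phi>) is a finite generating alphabet (B finite, w.l.o.g. a set of naturals, each letter
  naming the element of M represented by \<phi>), L a regular language over B mapping onto M.\<close>
definition lang_ok :: "'x set \<Rightarrow> ('x list \<times> 'x list) set \<Rightarrow> nat set \<Rightarrow> (nat \<Rightarrow> 'x list)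
    \<Rightarrow> nat list set \<Rightarrow> bool" where
  "lang_ok A S B \<phi> L \<longleftrightarrow> finite B \<and> (\<forall>h\<in>B. \<phi> h \<in> lists A) \<and> L \<subseteq> lists B \<and> regular L \<and>
      (\<forall>w\<in>lists A. \<exists>u\<in>L. (ev \<phi> u, w) \<in> congr S)"

definition automatic :: "'x set \<Rightarrow> ('x list \<times> 'x list) set \<Rightarrow> bool" where
  "automatic A S \<longleftrightarrow> (\<exists>B \<phi> L. lang_ok A S B \<phi> L \<and>
      (\<forall>g \<in> insert None (Some ` B). regular ((\<lambda>(u, v). deltaR u v) ` Lright S \<phi> L g)))"

definition biautomatic :: "'x set \<Rightarrow> ('x list \<times> 'x list) set \<Rightarrow> bool" where
  "biautomatic A S \<longleftrightarrow> (\<exists>B \<phi> L. lang_ok A S B \<phi> L \<and>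
      (\<forall>g \<in> insert None (Some ` B).
         regular ((\<lambda>(u, v). deltaR u v) ` Lright S \<phi> L g) \<and>
         regular ((\<lambda>(u, v). deltaR u v) ` Lleft S \<phi> L g) \<and>
         regular ((\<lambda>(u, v). deltaL u v) ` Lright S \<phi> L g) \<and>
         regular ((\<lambda>(u, v). deltaL u v) ` Lleft S \<phi> L g)))"

datatype letter = a | b | c

definition R0 :: "(letter list \<times> letter list) set" where
  "R0 = {([c,b,a,b], [c,b,c,b]), ([c,b,b,b], [c,b,c,b]), ([c,b,c,a], [c,a,c,b]),
         ([c,b,a,a], [c,b,c,a]), ([c,b,b,a], [c,b,c,a]), ([c,a,a,b], [c,a,c,b]),
         ([c,a,b,b], [c,a,c,b]), ([c,a,a,a], [c,a,c,a]), ([c,a,b,a], [c,a,c,a])}"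

end

theory Submission
  imports Defs
begin


lemma rstepI: "(l,r) \<in> R \<Longrightarrow> (x@l@y, x@r@y) \<in> rstep R"
  unfolding rstep_def by blast

lemma rstepI': "(l,r) \<in> R \<Longrightarrow> w1 = x@l@y \<Longrightarrow> w2 = x@r@y \<Longrightarrow> (w1,w2) \<in> rstep R"
  using rstepI by blast

lemma rstepE: "(s,t) \<in> rstep R \<Longrightarrow> (\<And>x l r y. s = x@l@y \<Longrightarrow> t = x@r@y \<Longrightarrow> (l,r)\<in>R \<Longrightarrow> P) \<Longrightarrow> P"
  unfolding rstep_def by blast

lemma rstep_ctx: "(s,t) \<in> rstep R \<Longrightarrow> (u@s@v, u@t@v) \<in> rstep R"
  by (erule rstepE) (rule rstepI'[where x="u@_" and y="_@v"], auto)

lemma rtrancl_ctx: "(s,t) \<in> (rstep R)\<^sup>* \<Longrightarrow> (u@s@v, u@t@v) \<in> (rstep R)\<^sup>*"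
proof (induction rule: rtrancl_induct)
  case base then show ?case by simp
next
  case (step y z) then show ?case by (meson rstep_ctx rtrancl.simps)
qed

lemma congr_refl[simp]: "(s,s) \<in> congr R"
  unfolding congr_def by simp

lemma congr_sym: "(s,t) \<in> congr R \<Longrightarrow> (t,s) \<in> congr R"
  unfolding congr_def
  by (metis converse_Un converse_converse rtrancl_converseI sup_commute)

lemma congr_trans: "(s,t) \<in> congr R \<Longrightarrow> (t,w) \<in> congr R \<Longrightarrow> (s,w) \<in> congr R"
  unfolding congr_def by (rule rtrancl_trans)

lemma congr_ctx: "(s,t) \<in> congr R \<Longrightarrow> (u@s@v, u@t@v) \<in> congr R"
  unfolding congr_def
proof (induction rule: rtrancl_induct)
  case base then show ?case by simp
next
  case (step y z)
  then have "(u@y@v, u@z@v) \<in> rstep R \<union> (rstep R)\<inverse>"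
    using rstep_ctx by blast
  then show ?case using step by (meson rtrancl.simps)
qed

lemma rstep_congr: "(s,t) \<in> rstep R \<Longrightarrow> (s,t) \<in> congr R"
  unfolding congr_def by blast

lemma rtrancl_congr: "(s,t) \<in> (rstep R)\<^sup>* \<Longrightarrow> (s,t) \<in> congr R"
  unfolding congr_def by (meson in_rtrancl_UnI)

lemma rule_congr: "(l,r) \<in> R \<Longrightarrow> (x@l@y, x@r@y) \<in> congr R"
  by (simp add: rstepI rstep_congr)

lemma congr_len:
  assumes "\<forall>(l,r)\<in>R. length l = length r" "(s,t) \<in> congr R"
  shows "length s = length t"
  using assms(2) unfolding congr_def
proof (induction rule: rtrancl_induct)
  case base then show ?case by simp
next
  case (step y z)
  then show ?case using assms(1) by (auto elim!: rstepE)
qed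

section \<open>Termination of R0\<close>

fun rank :: "letter \<Rightarrow> nat" where
  "rank a = 0" | "rank b = 1" | "rank c = 2"

fun val :: "letter list \<Rightarrow> nat" where
  "val [] = 0" | "val (h#t) = rank h + 3 * val t"

lemma val_append: "val (x@y) = val x + 3^length x * val y"
  by (induction x) auto

lemma rank_lt: "rank h < 3" by (cases h) auto

lemma val_lt: "val w < 3^length w"
proof (induction w)
  case Nil then show ?case by simp
next
  case (Cons h t)
  have "rank h + 3 * val t \<le> 2 + 3 * (3^length t - 1)" using rank_lt[of h] Cons by (cases h) auto
  also have "\<dots> < 3 ^ length (h#t)" using Cons by auto
  finally show ?case by simp
qed

lemma R0_len: "(l,r) \<in> R0 \<Longrightarrow> length l = 4 \<and> length r = 4"
  unfolding R0_def by auto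

lemma R0_val: "(l,r) \<in> R0 \<Longrightarrow> val l < val r"
  unfolding R0_def by auto

lemma R0_lenpres: "\<forall>(l,r)\<in>R0. length l = length r"
  using R0_len by auto

lemma rstep_val: "(s,t) \<in> rstep R0 \<Longrightarrow> val s < val t \<and> length s = length t"
proof (erule rstepE)
  fix x l r y assume *: "s = x@l@y" "t = x@r@y" "(l,r)\<in>R0"
  have "val l < val r" "length l = length r" using * R0_val R0_len by auto
  moreover have "3^length x > (0::nat)" by simp
  ultimately show ?thesis using * by (auto simp: val_append)
qed

lemma noeth_R0: "noetherian R0"
proof -
  let ?m = "\<lambda>w. 3^length w - val w"
  have "(rstep R0)\<inverse> \<subseteq> measure ?m"
  proof
    fix p assume "p \<in> (rstep R0)\<inverse>"
    then obtain s t where p: "p = (t,s)" "(s,t) \<in> rstep R0" by auto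
    with rstep_val[OF p(2)] val_lt[of t] show "p \<in> measure ?m"
      by auto
  qed
  then show ?thesis unfolding noetherian_def using wf_subset by blast
qed

lemma split_eq:
  assumes eq: "x1@l1@y1 = x2@l2@y2" and le: "length x1 \<le> length x2"
    and L: "length l1 = 4" "length l2 = 4"
  shows "(x1 = x2 \<and> l1 = l2 \<and> y1 = y2) \<or> (\<exists>m. x2 = x1@l1@m \<and> y1 = m@l2@y2) \<or>
         (\<exists>k. 0<k \<and> k<4 \<and> x2 = x1 @ take k l1 \<and> drop k l1 @ y1 = l2 @ y2)"
proof -
  obtain z where z: "x2 = x1 @ z"
    using eq le by (metis append_eq_append_conv_if append_eq_conv_conj)
  with eq have eq2: "l1@y1 = z@l2@y2" by simp
  consider "length z = 0" | "length z \<ge> 4" | "0 < length z \<and> length z < 4" by linarith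
  then show ?thesis
  proof cases
    case 1 then show ?thesis using z eq2 L by auto
  next
    case 2
    then obtain m where "z = l1 @ m" using eq2 L
      by (metis append_eq_append_conv_if append_eq_conv_conj)
    then show ?thesis using z eq2 by auto
  next
    case 3
    have "z = take (length z) (l1@y1)" using eq2 by simp
    then have "z = take (length z) l1" using 3 L by simp
    moreover have "drop (length z) (l1@y1) = l2@y2" using eq2 by simp
    then have "drop (length z) l1 @ y1 = l2@y2" using 3 L by simp
    ultimately show ?thesis using 3 z by blast
  qed
qed

lemma R0_overlap:
  assumes "0<k" "k<4" "(l1,r1)\<in>R0" "(l2,r2)\<in>R0" "drop k l1 @ y1 = l2 @ y2"
  shows "k=2 \<and> l1=[c,b,c,a] \<and> r1 = [c,a,c,b] \<and>
    (\<exists>p q. p\<noteq>c \<and> q\<noteq>c \<and> l2 = [c,a,p,q] \<and> r2 = [c,a,c,q] \<and> y1 = [p,q]@y2)"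
proof -
  have "k = 1 \<or> k = 2 \<or> k = 3" using assms(1,2) by auto
  then show ?thesis using assms(3-5) unfolding R0_def
    by (elim disjE) auto
qed


lemma R0_fun: "(l,r1)\<in>R0 \<Longrightarrow> (l,r2)\<in>R0 \<Longrightarrow> r1 = r2"
  unfolding R0_def by auto

lemma R0_step: "(l,r)\<in>R0 \<Longrightarrow> w1 = x@l@y \<Longrightarrow> w2 = x@r@y \<Longrightarrow> (w1,w2) \<in> (rstep R0)\<^sup>*"
  using rstepI' by blast

lemma crit_join:
  assumes "p \<noteq> c" "q \<noteq> c"
  shows "\<exists>z. ([c,a,c,b,p,q], z) \<in> (rstep R0)\<^sup>* \<and> ([c,b,c,a,c,q], z) \<in> (rstep R0)\<^sup>*"
proof -
  have r1: "([c,b,p,q],[c,b,c,q]) \<in> R0" using assms by (cases p; cases q) (auto simp: R0_def)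
  have r2: "([c,b,c,a],[c,a,c,b]) \<in> R0" by (simp add: R0_def)
  show ?thesis
  proof (cases q)
    case b
    have "([c,a,c,b,p,q], [c,a,c,b,c,b]) \<in> (rstep R0)\<^sup>*"
      by (rule R0_step[OF r1, of _ "[c,a]" "[]"]) (auto simp: b)
    moreover have "([c,b,c,a,c,q], [c,a,c,b,c,b]) \<in> (rstep R0)\<^sup>*"
      by (rule R0_step[OF r2, of _ "[]" "[c,q]"]) (auto simp: b)
    ultimately show ?thesis by blast
  next
    case a
    have "([c,a,c,b,p,q], [c,a,c,b,c,a]) \<in> (rstep R0)\<^sup>*"
      by (rule R0_step[OF r1, of _ "[c,a]" "[]"]) (auto simp: a)
    also have "([c,a,c,b,c,a], [c,a,c,a,c,b]) \<in> (rstep R0)\<^sup>*"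
      by (rule R0_step[OF r2, of _ "[c,a]" "[]"]) auto
    finally have 1: "([c,a,c,b,p,q], [c,a,c,a,c,b]) \<in> (rstep R0)\<^sup>*" .
    have "([c,b,c,a,c,q], [c,a,c,b,c,a]) \<in> (rstep R0)\<^sup>*"
      by (rule R0_step[OF r2, of _ "[]" "[c,q]"]) (auto simp: a)
    also have "([c,a,c,b,c,a], [c,a,c,a,c,b]) \<in> (rstep R0)\<^sup>*"
      by (rule R0_step[OF r2, of _ "[c,a]" "[]"]) auto
    finally show ?thesis using 1 by blast
  next
    case c then show ?thesis using assms by simp
  qed
qed

lemma lc_oriented:
  assumes "u = x1@l1@y1" "u = x2@l2@y2" "(l1,r1)\<in>R0" "(l2,r2)\<in>R0" "length x1 \<le> length x2"
  shows "\<exists>z. (x1@r1@y1, z) \<in> (rstep R0)\<^sup>* \<and> (x2@r2@y2, z) \<in> (rstep R0)\<^sup>*"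
proof -
  have L: "length l1 = 4" "length l2 = 4" using assms R0_len by auto
  from split_eq[OF _ assms(5) L] assms(1,2)
  consider "x1 = x2 \<and> l1 = l2 \<and> y1 = y2" | "\<exists>m. x2 = x1@l1@m \<and> y1 = m@l2@y2" |
    "\<exists>k. 0<k \<and> k<4 \<and> x2 = x1 @ take k l1 \<and> drop k l1 @ y1 = l2 @ y2" by metis
  then show ?thesis
  proof cases
    case 1 then show ?thesis using R0_fun assms by blast
  next
    case 2
    then obtain m where m: "x2 = x1@l1@m" "y1 = m@l2@y2" by blast
    have "(x1@r1@y1, x1@r1@m@r2@y2) \<in> (rstep R0)\<^sup>*"
      by (rule R0_step[OF assms(4), of _ "x1@r1@m"]) (auto simp: m)
    moreover have "(x2@r2@y2, x1@r1@m@r2@y2) \<in> (rstep R0)\<^sup>*"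
      by (rule R0_step[OF assms(3), of _ "x1" "m@r2@y2"]) (auto simp: m)
    ultimately show ?thesis by blast
  next
    case 3
    then obtain k where k: "0<k" "k<4" "x2 = x1 @ take k l1" "drop k l1 @ y1 = l2 @ y2" by blast
    from R0_overlap[OF k(1,2) assms(3,4) k(4)] obtain p q where
      pq: "k=2" "l1=[c,b,c,a]" "r1 = [c,a,c,b]" "p\<noteq>c" "q\<noteq>c" "l2 = [c,a,p,q]" "r2 = [c,a,c,q]"
          "y1 = [p,q]@y2" by blast
    obtain z where z: "([c,a,c,b,p,q], z) \<in> (rstep R0)\<^sup>*" "([c,b,c,a,c,q], z) \<in> (rstep R0)\<^sup>*"
      using crit_join[OF pq(4,5)] by blast
    have "(x1@r1@y1, x1@z@y2) \<in> (rstep R0)\<^sup>*" using rtrancl_ctx[OF z(1), of x1 y2] pq by simp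
    moreover have "(x2@r2@y2, x1@z@y2) \<in> (rstep R0)\<^sup>*" using rtrancl_ctx[OF z(2), of x1 y2] pq k(3) by simp
    ultimately show ?thesis by blast
  qed
qed

lemma lc_R0:
  assumes "(u,v) \<in> rstep R0" "(u,w) \<in> rstep R0"
  shows "\<exists>z. (v,z) \<in> (rstep R0)\<^sup>* \<and> (w,z) \<in> (rstep R0)\<^sup>*"
proof -
  obtain x1 l1 r1 y1 where 1: "u = x1@l1@y1" "v = x1@r1@y1" "(l1,r1)\<in>R0" using assms(1) by (auto elim: rstepE)
  obtain x2 l2 r2 y2 where 2: "u = x2@l2@y2" "w = x2@r2@y2" "(l2,r2)\<in>R0" using assms(2) by (auto elim: rstepE)
  show ?thesis
  proof (cases "length x1 \<le> length x2")
    case True then show ?thesis using lc_oriented[OF 1(1) 2(1) 1(3) 2(3)] 1 2 by auto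
  next
    case False then show ?thesis using lc_oriented[OF 2(1) 1(1) 2(3) 1(3)] 1 2 by auto
  qed
qed

lemma newman_gen:
  assumes wf: "wf (S\<inverse>)"
    and lc: "\<And>u v w. (u,v)\<in>S \<Longrightarrow> (u,w)\<in>S \<Longrightarrow> \<exists>z. (v,z)\<in>S\<^sup>* \<and> (w,z)\<in>S\<^sup>*"
  shows "(u,v)\<in>S\<^sup>* \<Longrightarrow> (u,w)\<in>S\<^sup>* \<Longrightarrow> \<exists>z. (v,z)\<in>S\<^sup>* \<and> (w,z)\<in>S\<^sup>*"
proof (induction u arbitrary: v w rule: wf_induct[OF wf])
  case (1 u)
  show ?case
  proof (cases "u = v \<or> u = w")
    case True then show ?thesis using 1 by blast
  next
    case False
    then obtain v1 where v1: "(u,v1)\<in>S" "(v1,v)\<in>S\<^sup>*" using 1(2) by (metis converse_rtranclE)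
    obtain w1 where w1: "(u,w1)\<in>S" "(w1,w)\<in>S\<^sup>*" using 1(3) False by (metis converse_rtranclE)
    obtain z where z: "(v1,z)\<in>S\<^sup>*" "(w1,z)\<in>S\<^sup>*" using lc[OF v1(1) w1(1)] by blast
    obtain z1 where z1: "(v,z1)\<in>S\<^sup>*" "(z,z1)\<in>S\<^sup>*" using 1(1) v1 z by blast
    have "(w1,z1)\<in>S\<^sup>*" using z(2) z1(2) by (rule rtrancl_trans)
    then obtain z2 where z2: "(w,z2)\<in>S\<^sup>*" "(z1,z2)\<in>S\<^sup>*" using 1(1) w1 by blast
    have "(v,z2)\<in>S\<^sup>*" using z1(1) z2(2) by (rule rtrancl_trans)
    then show ?thesis using z2 by blast
  qed
qed

lemma conf_R0: "confluent R0"
  unfolding confluent_def using newman_gen[of "rstep R0"] noeth_R0 lc_R0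
  unfolding noetherian_def by blast

lemma complete_R0: "complete_srs R0"
  by (simp add: complete_srs_def noeth_R0 conf_R0)


section \<open>An invariant\<close>

datatype st = Nc | Od | Ev

fun nx :: "st \<Rightarrow> letter \<Rightarrow> st" where
  "nx s x = (if x = c then Od else (case s of Nc \<Rightarrow> Nc | Od \<Rightarrow> Ev | Ev \<Rightarrow> Od))"

fun wt :: "st \<Rightarrow> letter \<Rightarrow> nat" where
  "wt s x = (if x = b \<and> s = Od then 1 else 0)"

fun cnt :: "st \<Rightarrow> letter list \<Rightarrow> nat" where
  "cnt s [] = 0"
| "cnt s (x#w) = wt s x + cnt (nx s x) w"

lemma cnt_append: "cnt s (u@v) = cnt s u + cnt (foldl nx s u) v"
  by (induction u arbitrary: s) auto

lemma cnt_le: "cnt s w \<le> length w"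
proof (induction w arbitrary: s)
  case Nil then show ?case by simp
next
  case (Cons x w)
  have "wt s x \<le> 1" by simp
  then show ?case using Cons.IH[of "nx s x"] by (simp del: wt.simps nx.simps)
qed

lemma cnt_nob: "b \<notin> set w \<Longrightarrow> cnt s w = 0"
  by (induction w arbitrary: s) auto

lemma rule_inv: "(l,r)\<in>R0 \<Longrightarrow> cnt s l = cnt s r \<and> foldl nx s l = foldl nx s r"
  unfolding R0_def by (cases s) auto

lemma cnt_rstep: "(u,v) \<in> rstep R0 \<Longrightarrow> cnt s u = cnt s v"
  by (erule rstepE) (auto simp: cnt_append rule_inv)

lemma cnt_congr: "(u,v) \<in> congr R0 \<Longrightarrow> cnt s u = cnt s v"
  unfolding congr_def
proof (induction rule: rtrancl_induct)
  case base then show ?case by simp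
next
  case (step y z) then show ?case using cnt_rstep by fastforce
qed

lemma cnt_rep_b: "cnt Ev (replicate m b) = m div 2 \<and> cnt Od (replicate m b) = (m+1) div 2"
  by (induction m) auto

lemma congr_fixed:
  assumes "(u,v) \<in> congr R0" "\<And>w. (u,w) \<in> rstep R0 \<union> (rstep R0)\<inverse> \<Longrightarrow> False"
  shows "v = u"
  using assms(1) unfolding congr_def
proof (induction rule: rtrancl_induct)
  case base then show ?case by simp
next
  case (step y z) then show ?case using assms(2) by blast
qed

lemma R0_has_c: "(l,r)\<in>R0 \<Longrightarrow> c \<in> set l \<and> c \<in> set r"
  unfolding R0_def by auto

lemma cfree_fixed:
  assumes "(u,v) \<in> congr R0" "c \<notin> set u"
  shows "v = u"
proof (rule congr_fixed[OF assms(1)])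
  fix w assume "(u,w) \<in> rstep R0 \<union> (rstep R0)\<inverse>"
  then show False using assms(2) R0_has_c by (auto elim!: rstepE)
qed

lemma short_fixed:
  assumes "(u,v) \<in> congr R0" "length u < 4"
  shows "v = u"
proof (rule congr_fixed[OF assms(1)])
  fix w assume "(u,w) \<in> rstep R0 \<union> (rstep R0)\<inverse>"
  then show False using assms(2) R0_len by (fastforce elim!: rstepE)
qed

abbreviation cbp :: "nat \<Rightarrow> letter list" where "cbp n \<equiv> concat (replicate n [c,b])"
abbreviation cap :: "nat \<Rightarrow> letter list" where "cap n \<equiv> concat (replicate n [c,a])"

lemma rep2: "replicate (2*Suc n) x = x # x # replicate (2*n) x"
  by simp

lemma tokb: "p \<noteq> c \<Longrightarrow> ([c,p] @ replicate (2*n) b @ r, [c,p] @ cbp n @ r) \<in> congr R0"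
proof (induction n arbitrary: p)
  case 0 then show ?case by simp
next
  case (Suc n)
  have rl: "([c,p,b,b],[c,p,c,b]) \<in> R0" using Suc.prems by (cases p) (auto simp: R0_def)
  have 1: "([c,p] @ replicate (2*Suc n) b @ r, [c,p,c,b] @ (replicate (2*n) b @ r)) \<in> congr R0"
    using rule_congr[OF rl, of "[]" "replicate (2*n) b @ r"] by (simp add: rep2)
  have 2: "([c,b] @ replicate (2*n) b @ r, [c,b] @ cbp n @ r) \<in> congr R0"
    using Suc.IH[of b] by simp
  have "([c,p] @ ([c,b] @ replicate (2*n) b @ r), [c,p] @ ([c,b] @ cbp n @ r) @ []) \<in> congr R0"
    using congr_ctx[OF 2, of "[c,p]" "[]"] by simp
  then show ?case using 1 congr_trans by fastforce
qed

lemma toka: "p \<noteq> c \<Longrightarrow> ([c,p] @ replicate (2*n) a @ r, [c,p] @ cap n @ r) \<in> congr R0"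
proof (induction n arbitrary: p)
  case 0 then show ?case by simp
next
  case (Suc n)
  have rl: "([c,p,a,a],[c,p,c,a]) \<in> R0" using Suc.prems by (cases p) (auto simp: R0_def)
  have 1: "([c,p] @ replicate (2*Suc n) a @ r, [c,p,c,a] @ (replicate (2*n) a @ r)) \<in> congr R0"
    using rule_congr[OF rl, of "[]" "replicate (2*n) a @ r"] by (simp add: rep2)
  have 2: "([c,a] @ replicate (2*n) a @ r, [c,a] @ cap n @ r) \<in> congr R0"
    using Suc.IH[of a] by simp
  have "([c,p] @ ([c,a] @ replicate (2*n) a @ r), [c,p] @ ([c,a] @ cap n @ r) @ []) \<in> congr R0"
    using congr_ctx[OF 2, of "[c,p]" "[]"] by simp
  then show ?case using 1 congr_trans by fastforce
qed

lemma concat_rep_snoc: "concat (replicate (Suc n) xs) = concat (replicate n xs) @ xs"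
  by (induction n) auto

lemma swap1: "(cbp n @ [c,a], [c,a] @ cbp n) \<in> congr R0"
proof (induction n)
  case 0 then show ?case by simp
next
  case (Suc n)
  have "(cbp n @ [c,b,c,a] @ [], cbp n @ [c,a,c,b] @ []) \<in> congr R0"
    by (rule rule_congr) (simp add: R0_def)
  moreover have "cbp (Suc n) @ [c,a] = cbp n @ [c,b,c,a] @ []"
    by (subst concat_rep_snoc) simp
  ultimately have 1: "(cbp (Suc n) @ [c,a], (cbp n @ [c,a]) @ [c,b]) \<in> congr R0"
    by simp
  have 2: "((cbp n @ [c,a]) @ [c,b], ([c,a] @ cbp n) @ [c,b]) \<in> congr R0"
    using congr_ctx[OF Suc.IH, of "[]" "[c,b]"] by simp
  have 3: "([c,a] @ cbp n) @ [c,b] = [c,a] @ cbp (Suc n)"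
    by (subst concat_rep_snoc) simp
  show ?case using congr_trans[OF 1 2] 3 by simp
qed

lemma swap2: "(cbp n @ cap m, cap m @ cbp n) \<in> congr R0"
proof (induction m)
  case 0 then show ?case by simp
next
  case (Suc m)
  have 1: "(cbp n @ cap (Suc m), [c,a] @ cbp n @ cap m) \<in> congr R0"
    using congr_ctx[OF swap1, where u="[]" and v="cap m"] by simp
  have 2: "([c,a] @ cbp n @ cap m, cap (Suc m) @ cbp n) \<in> congr R0"
    using congr_ctx[OF Suc.IH, where u="[c,a]" and v="[]"] by simp
  show ?case using congr_trans[OF 1 2] .
qed

definition x1w :: "nat \<Rightarrow> letter list" where "x1w N = a # replicate (2*N) b @ replicate (2*N) a"
definition x2w :: "nat \<Rightarrow> letter list" where "x2w N = a # replicate (2*N) a @ replicate (2*N) b"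

lemma cx1: "N \<ge> 1 \<Longrightarrow> (c # x1w N, [c,a] @ cap N @ cbp N) \<in> congr R0"
proof -
  assume N: "N \<ge> 1"
  then obtain M where M: "N = Suc M" by (cases N) auto
  have 1: "(c # x1w N, [c,a] @ cbp N @ replicate (2*N) a) \<in> congr R0"
    using tokb[of a N "replicate (2*N) a"] by (simp add: x1w_def)
  have T: "([c,b] @ replicate (2*N) a, [c,b] @ cap N) \<in> congr R0"
    using toka[of b N "[]"] by simp
  have A: "(([c,a] @ cbp M) @ ([c,b] @ replicate (2*N) a) @ [], ([c,a] @ cbp M) @ ([c,b] @ cap N) @ []) \<in> congr R0"
    by (rule congr_ctx[OF T])
  have e1: "([c,a] @ cbp M) @ ([c,b] @ replicate (2*N) a) @ [] = [c,a] @ cbp N @ replicate (2*N) a"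
    unfolding M concat_rep_snoc by simp
  have e2: "([c,a] @ cbp M) @ ([c,b] @ cap N) @ [] = [c,a] @ cbp N @ cap N"
    unfolding M concat_rep_snoc by simp
  have 2: "([c,a] @ cbp N @ replicate (2*N) a, [c,a] @ cbp N @ cap N) \<in> congr R0"
    using A unfolding e1 e2 .
  have 3: "([c,a] @ (cbp N @ cap N) @ [], [c,a] @ (cap N @ cbp N) @ []) \<in> congr R0"
    using congr_ctx[OF swap2] .
  show ?thesis using congr_trans[OF congr_trans[OF 1 2]] 3 by simp
qed

lemma cx2: "(c # x2w N, [c,a] @ cap N @ cbp N) \<in> congr R0"
proof -
  have 1: "(c # x2w N, [c,a] @ cap N @ replicate (2*N) b) \<in> congr R0"
    using toka[of a N "replicate (2*N) b"] by (simp add: x2w_def)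
  have "([c,a] @ replicate (2*N) b @ [], [c,a] @ cbp N @ []) \<in> congr R0"
    using tokb[of a N "[]"] by simp
  then have "(cap N @ ([c,a] @ replicate (2*N) b) @ [], cap N @ ([c,a] @ cbp N) @ []) \<in> congr R0"
    using congr_ctx[of _ _ R0 "cap N" "[]"] by simp
  moreover have "cap N @ [c,a] = [c,a] @ cap N"
    by (metis concat_rep_snoc concat_replicate_trivial replicate_Suc concat.simps(2))
  ultimately have 2: "([c,a] @ cap N @ replicate (2*N) b, [c,a] @ cap N @ cbp N) \<in> congr R0"
    by (metis append.assoc append_Nil2)
  show ?thesis using congr_trans[OF 1 2] .
qed

lemma cx12: "N \<ge> 1 \<Longrightarrow> (c # x2w N, c # x1w N) \<in> congr R0"
  using cx1 cx2 congr_sym congr_trans by blast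

lemma x1_cfree: "c \<notin> set (x1w N)" by (simp add: x1w_def)
lemma x2_cfree: "c \<notin> set (x2w N)" by (simp add: x2w_def)
lemma x1_len: "length (x1w N) = 4*N+1" by (simp add: x1w_def)
lemma x2_len: "length (x2w N) = 4*N+1" by (simp add: x2w_def)

lemma cnt_x1: "1 \<le> g \<Longrightarrow> g \<le> 2*N+1 \<Longrightarrow> cnt Nc (c # take g (x1w N)) = (g - 1) div 2"
proof -
  assume g: "1 \<le> g" "g \<le> 2*N+1"
  have "take g (x1w N) = a # replicate (g-1) b" using g
    by (cases g) (auto simp: x1w_def)
  then show ?thesis using cnt_rep_b[of "g-1"] by simp
qed

lemma cnt_x2: "g \<le> 2*N+1 \<Longrightarrow> cnt Nc (c # take g (x2w N)) = 0"
proof -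
  assume g: "g \<le> 2*N+1"
  have "take g (x2w N) = replicate g a" using g
    by (cases g) (auto simp: x2w_def)
  then show ?thesis by (simp add: cnt_nob)
qed


lemma ev_append[simp]: "ev f (u@v) = ev f u @ ev f v"
  by (simp add: ev_def)

lemma ev_Nil[simp]: "ev f [] = []" by (simp add: ev_def)
lemma ev_Cons[simp]: "ev f (x#u) = f x @ ev f u" by (simp add: ev_def)

lemma ev_take_drop: "ev f u = ev f (take i u) @ ev f (drop i u)"
  by (metis append_take_drop_id ev_append)

lemma ev_len: "u \<in> lists B \<Longrightarrow> \<forall>h\<in>B. length (f h) \<le> K \<Longrightarrow> length (ev f u) \<le> K * length u"
  by (induction u) (auto simp: add_mono)

lemma deltaR_len: "length (deltaR u v) = max (length u) (length v)"
  by (simp add: deltaR_def Let_def)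

lemma deltaR_nth: "j < max (length u) (length v) \<Longrightarrow>
  deltaR u v ! j = (if j < length u then Some (u!j) else None, if j < length v then Some (v!j) else None)"
  by (auto simp: deltaR_def Let_def nth_append)

lemma min_eq_aux: "(\<forall>j<i. j < (x::nat) \<longleftrightarrow> j < y) \<Longrightarrow> min i x = min i y"
  by (metis min.absorb1 min.absorb2 min.cobounded2 min_less_iff_conj nat_less_le not_le_imp_less)

lemma decode:
  assumes eq: "deltaR u' v' = take i (deltaR u v) @ \<sigma>" and i: "i \<le> length u"
  shows "take i u' = take i u \<and> take i v' = take i v \<and> length u' \<le> i + length \<sigma> \<and> length v' \<le> i + length \<sigma>"
proof -
  have li: "length (take i (deltaR u v)) = i" using i by (simp add: deltaR_len)
  have lm: "max (length u') (length v') = i + length \<sigma>"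
    using eq li by (metis deltaR_len length_append)
  have nj: "deltaR u' v' ! j = deltaR u v ! j" if "j < i" for j
    using that eq li by (simp add: nth_append)
  have A: "j < length u' \<and> u'!j = u!j \<and> (j < length v' \<longleftrightarrow> j < length v) \<and>
      (j < length v \<longrightarrow> v'!j = v!j)" if j: "j < i" for j
  proof -
    have j1: "j < max (length u') (length v')" using lm j by simp
    have j2: "j < max (length u) (length v)" using i j by simp
    have "deltaR u' v' ! j = deltaR u v ! j" using nj j by simp
    then show ?thesis using deltaR_nth[OF j1] deltaR_nth[OF j2] j i
      by (auto split: if_splits)
  qed
  have t1: "take i u' = take i u"
  proof (rule nth_equalityI)
    have "i \<le> length u'" using A[of "i-1"] by (cases i) auto
    then show "length (take i u') = length (take i u)" using i by simp
  next
    fix j assume "j < length (take i u')"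
    then show "take i u' ! j = take i u ! j" using A by simp
  qed
  have t2: "take i v' = take i v"
  proof (rule nth_equalityI)
    have "min i (length v') = min i (length v)" by (rule min_eq_aux) (use A in blast)
    then show "length (take i v') = length (take i v)" by simp
  next
    fix j assume j: "j < length (take i v')"
    then have "j < i" "j < length v'" by auto
    then show "take i v' ! j = take i v ! j" using A[of j] by auto
  qed
  show ?thesis using t1 t2 lm by (metis max.bounded_iff order_refl)
qed

lemma foldl_closed: "\<forall>q\<in>Q. \<forall>s. \<delta> q s \<in> Q \<Longrightarrow> q \<in> Q \<Longrightarrow> foldl \<delta> q w \<in> Q"
  by (induction w arbitrary: q) auto

lemma completion_bound:
  assumes "finite Q"
  shows "\<exists>C. \<forall>q\<in>Q. (\<exists>\<sigma>. foldl \<delta> q \<sigma> \<in> F) \<longrightarrow> (\<exists>\<sigma>. length \<sigma> \<le> C \<and> foldl \<delta> q \<sigma> \<in> F)"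
proof -
  define f where "f q = length (SOME \<sigma>. foldl \<delta> q \<sigma> \<in> F)" for q
  show ?thesis
  proof (rule exI[of _ "Max (f ` Q)"], intro ballI impI)
    fix q assume q: "q \<in> Q" and ex: "\<exists>\<sigma>. foldl \<delta> q \<sigma> \<in> F"
    have "foldl \<delta> q (SOME \<sigma>. foldl \<delta> q \<sigma> \<in> F) \<in> F" using ex by (rule someI_ex)
    moreover have "f q \<le> Max (f ` Q)" using q assms by simp
    ultimately show "\<exists>\<sigma>. length \<sigma> \<le> Max (f ` Q) \<and> foldl \<delta> q \<sigma> \<in> F"
      unfolding f_def by blast
  qed
qed

lemma concat_single: "concat xs = [x] \<Longrightarrow> [x] \<in> set xs"
proof (induction xs)
  case Nil then show ?case by simp
next
  case (Cons y ys)
  then show ?case by (cases y) auto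
qed

lemma cut:
  assumes "u \<in> lists B" "\<forall>h\<in>B. length (f h) \<le> K" "T \<le> length (ev f u)" "K \<ge> 1"
  shows "\<exists>i\<le>length u. length (ev f (take i u)) \<le> T \<and> T < length (ev f (take i u)) + K"
  using assms
proof (induction u rule: rev_induct)
  case Nil then show ?case by simp
next
  case (snoc h t)
  have hK: "length (f h) \<le> K" using snoc.prems by auto
  show ?case
  proof (cases "T \<le> length (ev f t)")
    case True
    then obtain i where "i \<le> length t" "length (ev f (take i t)) \<le> T" "T < length (ev f (take i t)) + K"
      using snoc by auto
    then show ?thesis by (intro exI[of _ i]) auto
  next
    case False
    show ?thesis
    proof (cases "T = length (ev f (t@[h]))")
      case True then show ?thesis using snoc.prems
        by (intro exI[of _ "length (t@[h])"]) auto
    next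
      case F2: False
      then show ?thesis using False hK snoc.prems(3)
        by (intro exI[of _ "length t"]) auto
    qed
  qed
qed

lemma FT:
  assumes D: "(\<lambda>(u,v). deltaR u v) ` Lleft R0 \<phi> L (Some e) = {w. foldl \<delta> q0 w \<in> F}"
    and Qc: "\<forall>q\<in>Q. \<forall>s. \<delta> q s \<in> Q" "q0 \<in> Q"
    and comp: "\<forall>q\<in>Q. (\<exists>\<sigma>. foldl \<delta> q \<sigma> \<in> F) \<longrightarrow> (\<exists>\<sigma>. length \<sigma> \<le> C \<and> foldl \<delta> q \<sigma> \<in> F)"
    and LB: "L \<subseteq> lists B" and K: "\<forall>h\<in>B. length (\<phi> h) \<le> K" and e: "\<phi> e = [c]"
    and uv: "(u,v) \<in> Lleft R0 \<phi> L (Some e)" and i: "i \<le> length u"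
  shows "\<exists>S S'. ([c] @ ev \<phi> (take i u) @ S, ev \<phi> (take i v) @ S') \<in> congr R0 \<and>
           length S \<le> C*K \<and> length S' \<le> C*K"
proof -
  let ?s = "deltaR u v"
  have "?s \<in> (\<lambda>(u,v). deltaR u v) ` Lleft R0 \<phi> L (Some e)"
    using uv by (rule rev_image_eqI) simp
  then have acc: "foldl \<delta> q0 ?s \<in> F" unfolding D by simp
  let ?p = "take i ?s"
  let ?q = "foldl \<delta> q0 ?p"
  have qQ: "?q \<in> Q" by (rule foldl_closed[OF Qc(1) Qc(2)])
  have "foldl \<delta> ?q (drop i ?s) \<in> F" using acc foldl_append[of \<delta> q0 ?p "drop i ?s"] by simp
  then have "\<exists>\<sigma>. foldl \<delta> ?q \<sigma> \<in> F" by blast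
  then obtain \<sigma> where \<sigma>: "length \<sigma> \<le> C" "foldl \<delta> ?q \<sigma> \<in> F" using comp qQ by blast
  have "?p @ \<sigma> \<in> {w. foldl \<delta> q0 w \<in> F}" using \<sigma> by simp
  then have "?p @ \<sigma> \<in> (\<lambda>(u,v). deltaR u v) ` Lleft R0 \<phi> L (Some e)" using D by simp
  then obtain pr where pr: "pr \<in> Lleft R0 \<phi> L (Some e)" "?p @ \<sigma> = (\<lambda>(u,v). deltaR u v) pr"
    by blast
  obtain u' v' where "pr = (u',v')" by (cases pr)
  then have uv': "(u',v') \<in> Lleft R0 \<phi> L (Some e)" "deltaR u' v' = ?p @ \<sigma>" using pr by auto
  from decode[OF uv'(2) i] have dc: "take i u' = take i u" "take i v' = take i v"
    "length u' \<le> i + length \<sigma>" "length v' \<le> i + length \<sigma>" by auto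
  have inL: "u' \<in> L" "v' \<in> L" and cg: "([c] @ ev \<phi> u', ev \<phi> v') \<in> congr R0"
    using uv'(1) e by (auto simp: Lleft_def)
  have "u' \<in> lists B" "v' \<in> lists B" using inL LB by blast+
  then have du: "drop i u' \<in> lists B" "drop i v' \<in> lists B"
    by (auto dest: in_set_dropD)
  have l1: "length (drop i u') \<le> C" "length (drop i v') \<le> C" using dc \<sigma> by auto
  have "length (ev \<phi> (drop i u')) \<le> K * length (drop i u')" using ev_len[OF du(1) K] .
  also have "\<dots> \<le> K * C" using l1 by simp
  finally have S1: "length (ev \<phi> (drop i u')) \<le> C*K" by (simp add: mult.commute)
  have "length (ev \<phi> (drop i v')) \<le> K * length (drop i v')" using ev_len[OF du(2) K] .
  also have "\<dots> \<le> K * C" using l1 by simp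
  finally have S2: "length (ev \<phi> (drop i v')) \<le> C*K" by (simp add: mult.commute)
  have e1: "ev \<phi> u' = ev \<phi> (take i u') @ ev \<phi> (drop i u')" by (rule ev_take_drop)
  have e2: "ev \<phi> v' = ev \<phi> (take i v') @ ev \<phi> (drop i v')" by (rule ev_take_drop)
  have "([c] @ ev \<phi> (take i u) @ ev \<phi> (drop i u'), ev \<phi> (take i v) @ ev \<phi> (drop i v')) \<in> congr R0"
    using cg unfolding e1 e2 dc(1,2) by simp
  then show ?thesis using S1 S2 by blast
qed

lemma prefix_cases: "P1 @ R1 = P2 @ R2 \<Longrightarrow> length P1 \<le> length P2 \<Longrightarrow> \<exists>W. P2 = P1 @ W"
  by (metis append_eq_append_conv_if append_eq_conv_conj)

lemma cnt_prefix: "cnt s (P @ W) \<ge> cnt s P"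
  by (simp add: cnt_append)

lemma cnt_prefix2: "cnt s (P @ W) \<le> cnt s P + length W"
  using cnt_le[of "foldl nx s P" W] by (simp add: cnt_append)

theorem not_biaut: "\<not> biautomatic (UNIV :: letter set) R0"
proof
  assume "biautomatic (UNIV :: letter set) R0"
  then obtain B \<phi> L where ok: "lang_ok (UNIV :: letter set) R0 B \<phi> L" and
    reg: "\<forall>g \<in> insert None (Some ` B). regular ((\<lambda>(u, v). deltaR u v) ` Lleft R0 \<phi> L g) \<and>
         regular ((\<lambda>(u, v). deltaR u v) ` Lright R0 \<phi> L g) \<and>
         regular ((\<lambda>(u, v). deltaL u v) ` Lright R0 \<phi> L g) \<and>
         regular ((\<lambda>(u, v). deltaL u v) ` Lleft R0 \<phi> L g)"
    unfolding biautomatic_def by blast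
  have finB: "finite B" and LB: "L \<subseteq> lists B" and gen: "\<forall>w\<in>lists UNIV. \<exists>u\<in>L. (ev \<phi> u, w) \<in> congr R0"
    using ok unfolding lang_ok_def by blast+
  have gen': "\<And>w. \<exists>u\<in>L. (ev \<phi> u, w) \<in> congr R0" using gen by simp
  obtain u0 where u0: "u0 \<in> L" "(ev \<phi> u0, [c]) \<in> congr R0" using gen' by blast
  have "ev \<phi> u0 = [c]" using short_fixed[OF congr_sym[OF u0(2)]] by simp
  then have "[c] \<in> set (map \<phi> u0)" unfolding ev_def by (rule concat_single)
  then obtain e where e: "e \<in> set u0" "\<phi> e = [c]" by (auto simp del: ev_Cons)
  have "u0 \<in> lists B" using u0(1) LB by blast
  then have eB: "e \<in> B" using e(1) by (simp add: in_listsD)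
  have "Some e \<in> insert None (Some ` B)" using eB by simp
  then have "regular ((\<lambda>(u, v). deltaR u v) ` Lleft R0 \<phi> L (Some e))" using reg by blast
  then obtain Q :: "nat set" and q0 \<delta> F where Q: "finite Q" "q0 \<in> Q" "\<forall>q\<in>Q. \<forall>s. \<delta> q s \<in> Q"
    and D: "(\<lambda>(u, v). deltaR u v) ` Lleft R0 \<phi> L (Some e) = {w. foldl \<delta> q0 w \<in> F}"
    unfolding regular_def apply (elim exE conjE) apply (rule that) by assumption+
  obtain C where comp: "\<forall>q\<in>Q. (\<exists>\<sigma>. foldl \<delta> q \<sigma> \<in> F) \<longrightarrow> (\<exists>\<sigma>. length \<sigma> \<le> C \<and> foldl \<delta> q \<sigma> \<in> F)"
    using completion_bound[OF Q(1)] by blast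
  define K where "K = Max ((\<lambda>h. length (\<phi> h)) ` B)"
  have K: "\<forall>h\<in>B. length (\<phi> h) \<le> K" using finB unfolding K_def by auto
  have "length (\<phi> e) \<le> K" using K eB by blast
  then have K1: "K \<ge> 1" using e(2) by simp
  define M where "M = C*K"
  define N where "N = 4*M + 4*K + 10"
  have N1: "N \<ge> 1" unfolding N_def by simp
  note FT' = FT[OF D Q(3) Q(2) comp LB K e(2)]
  obtain u1 where u1: "u1 \<in> L" "(ev \<phi> u1, x1w N) \<in> congr R0" using gen' by blast
  have ev1: "ev \<phi> u1 = x1w N" using cfree_fixed[OF congr_sym[OF u1(2)] x1_cfree] .
  obtain u2 where u2: "u2 \<in> L" "(ev \<phi> u2, x2w N) \<in> congr R0" using gen' by blast
  have ev2: "ev \<phi> u2 = x2w N" using cfree_fixed[OF congr_sym[OF u2(2)] x2_cfree] .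
  obtain v where v: "v \<in> L" "(ev \<phi> v, c # x1w N) \<in> congr R0" using gen' by blast
  have uv1: "(u1,v) \<in> Lleft R0 \<phi> L (Some e)"
    using u1(1) v(1) congr_sym[OF v(2)] ev1 e by (simp add: Lleft_def)
  have "([c] @ ev \<phi> u2, ev \<phi> v) \<in> congr R0"
    using congr_trans[OF cx12[OF N1] congr_sym[OF v(2)]] ev2 by simp
  then have uv2: "(u2,v) \<in> Lleft R0 \<phi> L (Some e)"
    using u2 v e unfolding Lleft_def by simp
  have u1B: "u1 \<in> lists B" and u2B: "u2 \<in> lists B" using u1(1) u2(1) LB by blast+
  obtain i1 where i1: "i1 \<le> length u1" "length (ev \<phi> (take i1 u1)) \<le> 2*N+1"
      "2*N+1 < length (ev \<phi> (take i1 u1)) + K"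
    using cut[OF u1B K _ K1, of "2*N+1"] ev1 x1_len by auto
  obtain i2 where i2: "i2 \<le> length u2" "length (ev \<phi> (take i2 u2)) \<le> 2*N+1"
      "2*N+1 < length (ev \<phi> (take i2 u2)) + K"
    using cut[OF u2B K _ K1, of "2*N+1"] ev2 x2_len by auto
  define g1 where "g1 = length (ev \<phi> (take i1 u1))"
  define g2 where "g2 = length (ev \<phi> (take i2 u2))"
  have "x1w N = ev \<phi> (take i1 u1) @ ev \<phi> (drop i1 u1)" using ev_take_drop[of \<phi> u1 i1] ev1 by simp
  then have U1: "ev \<phi> (take i1 u1) = take g1 (x1w N)" unfolding g1_def by simp
  have "x2w N = ev \<phi> (take i2 u2) @ ev \<phi> (drop i2 u2)" using ev_take_drop[of \<phi> u2 i2] ev2 by simp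
  then have U2: "ev \<phi> (take i2 u2) = take g2 (x2w N)" unfolding g2_def by simp
  obtain S1 S1' where S1: "([c] @ ev \<phi> (take i1 u1) @ S1, ev \<phi> (take i1 v) @ S1') \<in> congr R0"
     "length S1 \<le> M" "length S1' \<le> M" using FT'[OF uv1 i1(1)] unfolding M_def by blast
  obtain S2 S2' where S2: "([c] @ ev \<phi> (take i2 u2) @ S2, ev \<phi> (take i2 v) @ S2') \<in> congr R0"
     "length S2 \<le> M" "length S2' \<le> M" using FT'[OF uv2 i2(1)] unfolding M_def by blast
  define V1 where "V1 = ev \<phi> (take i1 v)"
  define V2 where "V2 = ev \<phi> (take i2 v)"
  have g1b: "1 \<le> g1" "g1 \<le> 2*N+1" "2*N+1 < g1 + K" using i1 N_def unfolding g1_def by auto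
  have g2b: "g2 \<le> 2*N+1" "2*N+1 < g2 + K" using i2 unfolding g2_def by auto
  have len1: "1 + g1 + length S1 = length V1 + length S1'"
    using congr_len[OF R0_lenpres S1(1)] U1 g1b unfolding V1_def g1_def by simp
  have len2: "1 + g2 + length S2 = length V2 + length S2'"
    using congr_len[OF R0_lenpres S2(1)] U2 g2b unfolding V2_def g2_def by simp
  have c1: "cnt Nc ([c] @ take g1 (x1w N) @ S1) = cnt Nc (V1 @ S1')"
    using cnt_congr[OF S1(1)] U1 unfolding V1_def by simp
  have "cnt Nc ([c] @ take g1 (x1w N) @ S1) \<ge> (g1 - 1) div 2"
    using cnt_prefix[of Nc "c # take g1 (x1w N)" S1] cnt_x1[OF g1b(1,2)] by simp
  moreover have "cnt Nc (V1 @ S1') \<le> cnt Nc V1 + length S1'" by (rule cnt_prefix2)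
  ultimately have cV1: "(g1 - 1) div 2 \<le> cnt Nc V1 + M" using c1 S1(3) by linarith
  have c2: "cnt Nc ([c] @ take g2 (x2w N) @ S2) = cnt Nc (V2 @ S2')"
    using cnt_congr[OF S2(1)] U2 unfolding V2_def by simp
  have "cnt Nc ([c] @ take g2 (x2w N) @ S2) \<le> cnt Nc (c # take g2 (x2w N)) + length S2"
    using cnt_prefix2[of Nc "c # take g2 (x2w N)" S2] by simp
  then have "cnt Nc (V2 @ S2') \<le> M" using cnt_x2[OF g2b(1)] c2 S2(2) by simp
  then have cV2: "cnt Nc V2 \<le> M" using cnt_prefix[of Nc V2 S2'] by linarith
  have dv: "2 * ((g1 - 1) div 2) + 2 \<ge> g1" by linarith
  have pre: "V1 @ ev \<phi> (drop i1 v) = V2 @ ev \<phi> (drop i2 v)"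
    unfolding V1_def V2_def using ev_take_drop[of \<phi> v i1] ev_take_drop[of \<phi> v i2] by simp
  show False
  proof (cases "length V1 \<le> length V2")
    case True
    then obtain W where "V2 = V1 @ W" using prefix_cases[OF pre] by blast
    then have "cnt Nc V1 \<le> cnt Nc V2" using cnt_prefix by simp
    then show False using cV1 cV2 dv g1b N_def S1 by linarith
  next
    case False
    then obtain W where W: "V1 = V2 @ W" using prefix_cases[OF pre[symmetric]] by fastforce
    then have "length W = length V1 - length V2" by simp
    then have "cnt Nc V1 \<le> cnt Nc V2 + (length V1 - length V2)" using cnt_prefix2 W by metis
    then show False using cV1 cV2 dv g1b g2b N_def S1 S2 len1 len2 by linarith
  qed
qed


fun enc :: "letter \<Rightarrow> nat" where "enc a = 0" | "enc b = 1" | "enc c = 2"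
definition dec :: "nat \<Rightarrow> letter" where "dec n = (if n = 0 then a else if n = 1 then b else c)"

lemma dec_enc[simp]: "dec (enc x) = x" by (cases x) (auto simp: dec_def)
lemma dec_comp_enc[simp]: "dec \<circ> enc = id" by auto
lemma map_dec_enc[simp]: "map dec (map enc w) = w" by (induction w) auto

definition Xn :: "nat set" where "Xn = {0,1,2}"
lemma enc_X[simp]: "enc x \<in> Xn" by (cases x) (auto simp: Xn_def)
lemma enc_dec: "n \<in> Xn \<Longrightarrow> enc (dec n) = n" by (auto simp: Xn_def dec_def)
lemma map_enc_dec: "w \<in> lists Xn \<Longrightarrow> map enc (map dec w) = w"
  by (induction w) (auto simp: enc_dec)
lemma map_enc_dec': "w \<in> lists Xn \<Longrightarrow> map (enc \<circ> dec) w = w"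
  using map_enc_dec by simp
lemma map_enc_lists[simp]: "map enc w \<in> lists Xn" by auto

definition Rn :: "(nat list \<times> nat list) set" where
  "Rn = (\<lambda>(l,r). (map enc l, map enc r)) ` R0"

lemma Rn_explicit: "Rn = {([2,1,0,1], [2,1,2,1]), ([2,1,1,1], [2,1,2,1]), ([2,1,2,0], [2,0,2,1]),
         ([2,1,0,0], [2,1,2,0]), ([2,1,1,0], [2,1,2,0]), ([2,0,0,1], [2,0,2,1]),
         ([2,0,1,1], [2,0,2,1]), ([2,0,0,0], [2,0,2,0]), ([2,0,1,0], [2,0,2,0])}"
  unfolding Rn_def R0_def by simp

lemma Rn_len: "(l,r) \<in> Rn \<Longrightarrow> length l = 4 \<and> length r = 4"
  unfolding Rn_explicit by auto

lemma Rn_lists: "Rn \<subseteq> lists Xn \<times> lists Xn"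
  unfolding Rn_def by auto

lemma finite_Rn: "finite Rn" unfolding Rn_explicit by simp

lemma Rn_fun: "(l,r1)\<in>Rn \<Longrightarrow> (l,r2)\<in>Rn \<Longrightarrow> r1 = r2"
  unfolding Rn_explicit by auto

lemma rstep_map:
  assumes "\<forall>(l,r)\<in>R. (map h l, map h r) \<in> S" "(u,v) \<in> rstep R"
  shows "(map h u, map h v) \<in> rstep S"
  using assms(2)
proof (rule rstepE)
  fix x l r y assume *: "u = x@l@y" "v = x@r@y" "(l,r)\<in>R"
  then have "(map h l, map h r) \<in> S" using assms(1) by blast
  then show ?thesis using * by (auto intro: rstepI')
qed

lemma rtrancl_map:
  assumes "\<forall>(l,r)\<in>R. (map h l, map h r) \<in> S" "(u,v) \<in> (rstep R)\<^sup>*"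
  shows "(map h u, map h v) \<in> (rstep S)\<^sup>*"
  using assms(2)
proof (induction rule: rtrancl_induct)
  case base then show ?case by simp
next
  case (step y z) then show ?case using rstep_map[OF assms(1)] by (meson rtrancl.simps)
qed

lemma congr_map:
  assumes "\<forall>(l,r)\<in>R. (map h l, map h r) \<in> S" "(u,v) \<in> congr R"
  shows "(map h u, map h v) \<in> congr S"
  using assms(2) unfolding congr_def
proof (induction rule: rtrancl_induct)
  case base then show ?case by simp
next
  case (step y z)
  then have "(map h y, map h z) \<in> rstep S \<union> (rstep S)\<inverse>" using rstep_map[OF assms(1)] by blast
  then show ?case using step by (meson rtrancl.simps)
qed

lemma Rn_dec: "\<forall>(l,r)\<in>Rn. (map dec l, map dec r) \<in> R0"
  unfolding Rn_def by (auto simp del: map_map simp: map_dec_enc)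

lemma R0_enc: "\<forall>(l,r)\<in>R0. (map enc l, map enc r) \<in> Rn"
  unfolding Rn_def by auto

lemma noeth_Rn: "noetherian Rn"
proof -
  have "(rstep Rn)\<inverse> \<subseteq> inv_image ((rstep R0)\<inverse>) (map dec)"
    using rstep_map[OF Rn_dec] by auto
  moreover have "wf (inv_image ((rstep R0)\<inverse>) (map dec))"
    using noeth_R0 unfolding noetherian_def by simp
  ultimately show ?thesis unfolding noetherian_def using wf_subset by blast
qed

lemma Rn_overlap:
  assumes "0<k" "k<4" "(l1,r1)\<in>Rn" "(l2,r2)\<in>Rn" "drop k l1 @ y1 = l2 @ y2"
  shows "k=2 \<and> l1=[2,1,2,0] \<and> r1 = [2,0,2,1] \<and>
    (\<exists>p q. p \<in> {0,1} \<and> q \<in> {0,1} \<and> l2 = [2,0,p,q] \<and> r2 = [2,0,2,q] \<and> y1 = [p,q]@y2)"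
proof -
  obtain l1' r1' where 1: "l1 = map enc l1'" "r1 = map enc r1'" "(l1',r1') \<in> R0"
    using assms(3) unfolding Rn_def by auto
  obtain l2' r2' where 2: "l2 = map enc l2'" "r2 = map enc r2'" "(l2',r2') \<in> R0"
    using assms(4) unfolding Rn_def by auto
  have "map dec (drop k l1 @ y1) = map dec (l2 @ y2)" using assms(5) by simp
  then have "drop k l1' @ map dec y1 = l2' @ map dec y2" using 1 2 by (simp add: drop_map)
  from R0_overlap[OF assms(1,2) 1(3) 2(3) this] obtain p' q' where
    o: "k=2" "l1'=[c,b,c,a]" "r1' = [c,a,c,b]" "p'\<noteq>c" "q'\<noteq>c" "l2' = [c,a,p',q']" "r2' = [c,a,c,q']"
    by blast
  have "enc p' \<in> {0,1}" "enc q' \<in> {0,1}" using o(4,5) by (cases p'; simp; cases q'; simp)+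
  moreover have "y1 = [enc p', enc q'] @ y2" using assms(5) 1 2 o by simp
  ultimately show ?thesis using 1 2 o by auto
qed

lemma peak_Rn:
  assumes "x1@l1@y1 = x2@l2@y2" "(l1,r1)\<in>Rn" "(l2,r2)\<in>Rn" "length x1 \<le> length x2"
  shows "(x1 = x2 \<and> l1 = l2 \<and> r1 = r2 \<and> y1 = y2) \<or> (\<exists>m. x2 = x1@l1@m \<and> y1 = m@l2@y2) \<or>
    (\<exists>p q. p \<in> {0,1} \<and> q \<in> {0,1} \<and> l1=[2,1,2,0] \<and> r1 = [2,0,2,1] \<and> l2 = [2,0,p,q] \<and>
       r2 = [2,0,2,q] \<and> x2 = x1 @ [2,1] \<and> y1 = [p,q]@y2)"
proof -
  have L: "length l1 = 4" "length l2 = 4" using assms Rn_len by auto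
  from split_eq[OF assms(1,4) L]
  consider "x1 = x2 \<and> l1 = l2 \<and> y1 = y2" | "\<exists>m. x2 = x1@l1@m \<and> y1 = m@l2@y2" |
    "\<exists>k. 0<k \<and> k<4 \<and> x2 = x1 @ take k l1 \<and> drop k l1 @ y1 = l2 @ y2" by metis
  then show ?thesis
  proof cases
    case 1 then show ?thesis using Rn_fun assms by blast
  next
    case 2 then show ?thesis by blast
  next
    case 3
    then obtain k where k: "0<k" "k<4" "x2 = x1 @ take k l1" "drop k l1 @ y1 = l2 @ y2" by blast
    from Rn_overlap[OF k(1,2) assms(2,3) k(4)] k(3) show ?thesis by auto
  qed
qed

lemma crit_join_Rn:
  assumes "p \<in> {0,1}" "q \<in> {0,1}"
  shows "\<exists>z. ([2,0,2,1,p,q], z) \<in> (rstep Rn)\<^sup>* \<and> ([2,1,2,0,2,q], z) \<in> (rstep Rn)\<^sup>*"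
proof -
  have pq: "dec p \<noteq> c" "dec q \<noteq> c" using assms by (auto simp: dec_def)
  obtain z where z: "([c,a,c,b,dec p,dec q], z) \<in> (rstep R0)\<^sup>*" "([c,b,c,a,c,dec q], z) \<in> (rstep R0)\<^sup>*"
    using crit_join[OF pq] by blast
  have e: "enc (dec p) = p" "enc (dec q) = q" using assms by (auto simp: enc_dec Xn_def)
  show ?thesis using rtrancl_map[OF R0_enc z(1)] rtrancl_map[OF R0_enc z(2)] e by auto
qed

lemma lc_Rn:
  assumes "(u,v) \<in> rstep Rn" "(u,w) \<in> rstep Rn"
  shows "\<exists>z. (v,z) \<in> (rstep Rn)\<^sup>* \<and> (w,z) \<in> (rstep Rn)\<^sup>*"
proof -
  have key: "\<exists>z. (x1@r1@y1, z) \<in> (rstep Rn)\<^sup>* \<and> (x2@r2@y2, z) \<in> (rstep Rn)\<^sup>*"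
    if "x1@l1@y1 = x2@l2@y2" "(l1,r1)\<in>Rn" "(l2,r2)\<in>Rn" "length x1 \<le> length x2"
    for x1 l1 r1 y1 x2 l2 r2 y2
  proof -
    from peak_Rn[OF that]
    consider "x1 = x2 \<and> l1 = l2 \<and> r1 = r2 \<and> y1 = y2" | "\<exists>m. x2 = x1@l1@m \<and> y1 = m@l2@y2" |
    "\<exists>p q. p \<in> {0,1} \<and> q \<in> {0,1} \<and> l1=[2,1,2,0] \<and> r1 = [2,0,2,1] \<and> l2 = [2,0,p,q] \<and>
       r2 = [2,0,2,q] \<and> x2 = x1 @ [2,1] \<and> y1 = [p,q]@y2" by blast
    then show ?thesis
    proof cases
      case 1 then show ?thesis by blast
    next
      case 2
      then obtain m where m: "x2 = x1@l1@m" "y1 = m@l2@y2" by blast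
      have "(x1@r1@y1, x1@r1@m@r2@y2) \<in> rstep Rn"
        by (rule rstepI'[OF that(3), of _ "x1@r1@m"]) (auto simp: m)
      moreover have "(x2@r2@y2, x1@r1@m@r2@y2) \<in> rstep Rn"
        by (rule rstepI'[OF that(2), of _ "x1" "m@r2@y2"]) (auto simp: m)
      ultimately show ?thesis by blast
    next
      case 3
      then obtain p q where pq: "p \<in> {0,1}" "q \<in> {0,1}" "l1=[2,1,2,0]" "r1 = [2,0,2,1]" "l2 = [2,0,p,q]"
        "r2 = [2,0,2,q]" "x2 = x1 @ [2,1]" "y1 = [p,q]@y2" by blast
      obtain z where z: "([2,0,2,1,p,q], z) \<in> (rstep Rn)\<^sup>*" "([2,1,2,0,2,q], z) \<in> (rstep Rn)\<^sup>*"
        using crit_join_Rn[OF pq(1,2)] by blast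
      have "(x1@r1@y1, x1@z@y2) \<in> (rstep Rn)\<^sup>*" using rtrancl_ctx[OF z(1), of x1 y2] pq by simp
      moreover have "(x2@r2@y2, x1@z@y2) \<in> (rstep Rn)\<^sup>*" using rtrancl_ctx[OF z(2), of x1 y2] pq by simp
      ultimately show ?thesis by blast
    qed
  qed
  obtain x1 l1 r1 y1 where 1: "u = x1@l1@y1" "v = x1@r1@y1" "(l1,r1)\<in>Rn" using assms(1) by (auto elim: rstepE)
  obtain x2 l2 r2 y2 where 2: "u = x2@l2@y2" "w = x2@r2@y2" "(l2,r2)\<in>Rn" using assms(2) by (auto elim: rstepE)
  show ?thesis
  proof (cases "length x1 \<le> length x2")
    case True then show ?thesis using key[of x1 l1 y1 x2 l2 y2 r1 r2] 1 2 by auto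
  next
    case False then show ?thesis using key[of x2 l2 y2 x1 l1 y1 r2 r1] 1 2 by auto
  qed
qed

lemma conf_Rn: "confluent Rn"
  unfolding confluent_def using newman_gen[of "rstep Rn"] noeth_Rn lc_Rn
  unfolding noetherian_def by blast

lemma complete_Rn: "complete_srs Rn"
  by (simp add: complete_srs_def noeth_Rn conf_Rn)

lemma fin_pres_Rn: "fin_pres Xn Rn"
  unfolding fin_pres_def using finite_Rn Rn_lists by (simp add: Xn_def)

lemma ev_dec: "ev (\<lambda>y. [dec y]) u = map dec u"
  by (induction u) (auto simp: ev_def)

lemma pres_Rn: "presents_same Xn Rn (UNIV :: letter set) R0"
  unfolding presents_same_def
proof (intro exI[of _ "\<lambda>y. [dec y]"] exI[of _ "\<lambda>z. [enc z]"] conjI ballI)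
  fix u v assume uv: "u \<in> lists Xn" "v \<in> lists Xn"
  show "((u, v) \<in> congr Rn) = ((ev (\<lambda>y. [dec y]) u, ev (\<lambda>y. [dec y]) v) \<in> congr R0)"
  proof
    assume "(u,v) \<in> congr Rn"
    then show "(ev (\<lambda>y. [dec y]) u, ev (\<lambda>y. [dec y]) v) \<in> congr R0"
      using congr_map[OF Rn_dec] by (simp add: ev_dec)
  next
    assume "(ev (\<lambda>y. [dec y]) u, ev (\<lambda>y. [dec y]) v) \<in> congr R0"
    then have H: "(map dec u, map dec v) \<in> congr R0" by (simp add: ev_dec)
    have "(map enc (map dec u), map enc (map dec v)) \<in> congr Rn"
      by (rule congr_map[OF R0_enc H])
    then show "(u,v) \<in> congr Rn" using uv by (simp only: map_enc_dec)
  qed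
qed (auto simp: ev_def)

lemma FCRS_R0: "FCRS (UNIV :: letter set) R0"
  unfolding FCRS_def using fin_pres_Rn complete_Rn pres_Rn by blast


section \<open>Generic Squier argument\<close>

definition pos :: "'x edge list \<Rightarrow> bool" where
  "pos es \<longleftrightarrow> (\<forall>e\<in>set es. fst (snd (snd e)))"

definition irr :: "('x list \<times> 'x list) set \<Rightarrow> 'x list \<Rightarrow> bool" where
  "irr R w \<longleftrightarrow> (\<forall>w'. (w,w') \<notin> rstep R)"

lemma pos_simps[simp]: "pos [] = True" "pos (e#es) \<longleftrightarrow> fst (snd (snd e)) \<and> pos es"
  "pos (es1@es2) \<longleftrightarrow> pos es1 \<and> pos es2"
  by (auto simp: pos_def)

lemma chain_append: "chain w (es1@es2) \<longleftrightarrow> chain w es1 \<and> chain (ptgt w es1) es2"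
  by (induction es1 arbitrary: w) auto

lemma ptgt_append: "ptgt w (es1@es2) = ptgt (ptgt w es1) es2"
  by (induction es1 arbitrary: w) auto

lemma einv_einv[simp]: "einv (einv e) = e"
  by (cases e) auto

lemma esrc_einv[simp]: "esrc (einv e) = etgt e" and etgt_einv[simp]: "etgt (einv e) = esrc e"
  by (cases e; auto)+

lemma dedges_einv: "e \<in> dedges X R \<Longrightarrow> einv e \<in> dedges X R"
  by (cases e) (auto simp: dedges_def)

lemma chain_inv: "chain w es \<Longrightarrow> chain (ptgt w es) (rev (map einv es)) \<and> ptgt (ptgt w es) (rev (map einv es)) = w"
proof (induction es arbitrary: w)
  case Nil then show ?case by simp
next
  case (Cons e es)
  then have "esrc e = w" "chain (etgt e) es" by auto
  with Cons.IH[of "etgt e"] show ?case by (simp add: chain_append ptgt_append)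
qed

lemma dpathsI: "w \<in> lists X \<Longrightarrow> set es \<subseteq> dedges X R \<Longrightarrow> chain w es \<Longrightarrow> (w,es) \<in> dpaths X R"
  by (simp add: dpaths_def)

lemma dpathsD: "(w,es) \<in> dpaths X R \<Longrightarrow> w \<in> lists X \<and> set es \<subseteq> dedges X R \<and> chain w es"
  by (simp add: dpaths_def)

lemma edge_lists:
  assumes "R \<subseteq> lists X \<times> lists X" "e \<in> dedges X R"
  shows "esrc e \<in> lists X \<and> etgt e \<in> lists X"
proof -
  obtain x l r d y where e: "e = (x,(l,r),d,y)" by (cases e) auto
  then have "(l,r) \<in> R" "x \<in> lists X" "y \<in> lists X" using assms(2) by (auto simp: dedges_def)
  then have "l \<in> lists X" "r \<in> lists X" using assms(1) by auto
  then show ?thesis using e \<open>x \<in> lists X\<close> \<open>y \<in> lists X\<close> by auto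
qed

lemma ptgt_lists:
  assumes "R \<subseteq> lists X \<times> lists X" "(w,es) \<in> dpaths X R"
  shows "ptgt w es \<in> lists X"
  using assms(2)
proof (induction es arbitrary: w)
  case Nil then show ?case by (simp add: dpaths_def)
next
  case (Cons e es)
  then have "e \<in> dedges X R" "esrc e = w" "chain (etgt e) es" "set es \<subseteq> dedges X R"
    by (auto simp: dpaths_def)
  then have "(etgt e, es) \<in> dpaths X R" using edge_lists[OF assms(1)] by (auto simp: dpaths_def)
  then show ?case using Cons.IH by simp
qed

lemma dpaths_append:
  "(w, es1@es2) \<in> dpaths X R \<longleftrightarrow> (w,es1) \<in> dpaths X R \<and> chain (ptgt w es1) es2 \<and> set es2 \<subseteq> dedges X R"
  by (auto simp: dpaths_def chain_append)

lemma pos_edge_step: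
  assumes "e \<in> dedges X R" "fst (snd (snd e))"
  shows "(esrc e, etgt e) \<in> rstep R"
proof -
  obtain x l r y where e: "e = (x,(l,r),True,y)" using assms(2) by (cases e) auto
  then have "(l,r) \<in> R" using assms(1) by (auto simp: dedges_def)
  then show ?thesis using e by (auto intro: rstepI)
qed

lemma neg_edge_step:
  assumes "e \<in> dedges X R" "\<not> fst (snd (snd e))"
  shows "(etgt e, esrc e) \<in> rstep R"
proof -
  obtain x l r y where e: "e = (x,(l,r),False,y)" using assms(2) by (cases e) auto
  then have "(l,r) \<in> R" using assms(1) by (auto simp: dedges_def)
  then show ?thesis using e by (auto intro: rstepI)
qed

lemma step_edge:
  assumes "(u,v) \<in> rstep R" "u \<in> lists X"
  shows "\<exists>e. e \<in> dedges X R \<and> fst (snd (snd e)) \<and> esrc e = u \<and> etgt e = v"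
proof -
  obtain x l r y where *: "u = x@l@y" "v = x@r@y" "(l,r)\<in>R" using assms(1) by (auto elim: rstepE)
  then have "x \<in> lists X" "y \<in> lists X" using assms(2) by auto
  then show ?thesis using * by (intro exI[of _ "(x,(l,r),True,y)"]) (auto simp: dedges_def)
qed

lemma pos_path_rtrancl:
  assumes "chain w es" "set es \<subseteq> dedges X R" "pos es"
  shows "(w, ptgt w es) \<in> (rstep R)\<^sup>*"
  using assms
proof (induction es arbitrary: w)
  case Nil then show ?case by simp
next
  case (Cons e es)
  then have "e \<in> dedges X R" "esrc e = w" "fst (snd (snd e))" "chain (etgt e) es" "set es \<subseteq> dedges X R" "pos es"
    by auto
  then show ?case using Cons.IH pos_edge_step by (metis converse_rtrancl_into_rtrancl ptgt.simps(2))
qed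

lemma irr_rtrancl: "irr R w \<Longrightarrow> (w,v) \<in> (rstep R)\<^sup>* \<Longrightarrow> v = w"
  unfolding irr_def by (metis converse_rtranclE)

lemma unique_nf:
  assumes "confluent R" "(u,n1) \<in> (rstep R)\<^sup>*" "(u,n2) \<in> (rstep R)\<^sup>*" "irr R n1" "irr R n2"
  shows "n1 = n2"
proof -
  obtain z where "(n1,z) \<in> (rstep R)\<^sup>*" "(n2,z) \<in> (rstep R)\<^sup>*"
    using assms(1-3) unfolding confluent_def by blast
  then show ?thesis using irr_rtrancl assms(4,5) by metis
qed

lemma ex_pos:
  assumes RX: "R \<subseteq> lists X \<times> lists X" and wf: "wf ((rstep R)\<inverse>)"
  shows "u \<in> lists X \<Longrightarrow> \<exists>es. (u,es) \<in> dpaths X R \<and> pos es \<and> irr R (ptgt u es)"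
proof (induction u rule: wf_induct[OF wf])
  case (1 u)
  show ?case
  proof (cases "irr R u")
    case True then show ?thesis using 1 by (intro exI[of _ "[]"]) (auto simp: dpaths_def)
  next
    case False
    then obtain v where v: "(u,v) \<in> rstep R" unfolding irr_def by blast
    obtain e where e: "e \<in> dedges X R" "fst (snd (snd e))" "esrc e = u" "etgt e = v"
      using step_edge[OF v 1(2)] by blast
    have "v \<in> lists X" using edge_lists[OF RX e(1)] e by simp
    then obtain es where es: "(v,es) \<in> dpaths X R" "pos es" "irr R (ptgt v es)"
      using 1(1) v by blast
    then show ?thesis using e 1(2)
      by (intro exI[of _ "e#es"]) (auto simp: dpaths_def)
  qed
qed

lemma H_left:
  assumes "((w,es1),(w,es2)) \<in> htpy X R Bs" "(u,rs) \<in> dpaths X R" "ptgt u rs = w"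
    "(w,es1) \<in> dpaths X R" "R \<subseteq> lists X \<times> lists X"
  shows "((u, rs@es1),(u, rs@es2)) \<in> htpy X R Bs"
proof -
  have s: "(ptgt w es1, []) \<in> dpaths X R" using ptgt_lists[OF assms(5,4)] by (simp add: dpaths_def)
  have "(pcomp (pcomp (u,rs) (w,es1)) (ptgt w es1, []), pcomp (pcomp (u,rs) (w,es2)) (ptgt w es1, [])) \<in> htpy X R Bs"
    by (rule htpy.comp[OF assms(1) assms(2) s]) (auto simp: pend_def pstart_def assms(3))
  then show ?thesis by (simp add: pcomp_def)
qed

lemma H_right:
  assumes "((w,es1),(w,es2)) \<in> htpy X R Bs" "(w,es1) \<in> dpaths X R" "(v,ss) \<in> dpaths X R"
    "ptgt w es1 = v"
  shows "((w, es1@ss),(w, es2@ss)) \<in> htpy X R Bs"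
proof -
  have r: "(w, []) \<in> dpaths X R" using assms(2) by (simp add: dpaths_def)
  have "(pcomp (pcomp (w,[]) (w,es1)) (v,ss), pcomp (pcomp (w,[]) (w,es2)) (v,ss)) \<in> htpy X R Bs"
    by (rule htpy.comp[OF assms(1) r assms(3)]) (auto simp: pend_def pstart_def assms(4))
  then show ?thesis by (simp add: pcomp_def)
qed

lemma H_trans: "(p,q) \<in> htpy X R Bs \<Longrightarrow> (q,s) \<in> htpy X R Bs \<Longrightarrow> (p,s) \<in> htpy X R Bs"
  by (rule htpy.trans)

lemma H_sym: "(p,q) \<in> htpy X R Bs \<Longrightarrow> (q,p) \<in> htpy X R Bs"
  by (rule htpy.sym)

definition LPH :: "'x set \<Rightarrow> ('x list \<times> 'x list) set \<Rightarrow> ('x dpath \<times> 'x dpath) set \<Rightarrow> bool" where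
  "LPH X R Bs \<longleftrightarrow> (\<forall>u e1 e2. u \<in> lists X \<longrightarrow> e1 \<in> dedges X R \<longrightarrow> e2 \<in> dedges X R \<longrightarrow>
     fst (snd (snd e1)) \<longrightarrow> fst (snd (snd e2)) \<longrightarrow> esrc e1 = u \<longrightarrow> esrc e2 = u \<longrightarrow>
     (\<exists>r1 r2. (etgt e1, r1) \<in> dpaths X R \<and> (etgt e2, r2) \<in> dpaths X R \<and> pos r1 \<and> pos r2 \<and>
        ptgt (etgt e1) r1 = ptgt (etgt e2) r2 \<and> ((u, e1#r1),(u, e2#r2)) \<in> htpy X R Bs))"

lemma squier_P:
  assumes RX: "R \<subseteq> lists X \<times> lists X" and wf: "wf ((rstep R)\<inverse>)" and conf: "confluent R"
    and lph: "LPH X R Bs"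
  shows "u \<in> lists X \<Longrightarrow> (u,es1) \<in> dpaths X R \<Longrightarrow> (u,es2) \<in> dpaths X R \<Longrightarrow> pos es1 \<Longrightarrow> pos es2 \<Longrightarrow>
     irr R (ptgt u es1) \<Longrightarrow> irr R (ptgt u es2) \<Longrightarrow> ((u,es1),(u,es2)) \<in> htpy X R Bs"
proof (induction u arbitrary: es1 es2 rule: wf_induct[OF wf])
  case (1 u)
  show ?case
  proof (cases es1)
    case Nil
    then have iu: "irr R u" using 1 by simp
    have "es2 = []"
    proof (rule ccontr)
      assume "es2 \<noteq> []"
      then obtain e t where "es2 = e#t" by (cases es2) auto
      then have "e \<in> dedges X R" "fst (snd (snd e))" "esrc e = u" using 1 by (auto simp: dpaths_def)
      then show False using pos_edge_step iu unfolding irr_def by metis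
    qed
    then show ?thesis using Nil 1 htpy.refl by metis
  next
    case (Cons e1 t1)
    have e1': "e1 \<in> dedges X R" "fst (snd (snd e1))" "esrc e1 = u" "chain (etgt e1) t1" "set t1 \<subseteq> dedges X R" "pos t1"
      using 1 Cons by (auto simp: dpaths_def)
    have "(etgt e1, t1) \<in> dpaths X R" using e1' edge_lists[OF RX e1'(1)] by (simp add: dpaths_def)
    then have e1: "e1 \<in> dedges X R" "fst (snd (snd e1))" "esrc e1 = u" "(etgt e1, t1) \<in> dpaths X R" "pos t1"
      using e1' by auto
    then have "\<not> irr R u" using pos_edge_step unfolding irr_def by metis
    then obtain e2 t2 where Cons2: "es2 = e2#t2"
      using 1 by (cases es2) auto
    have e2': "e2 \<in> dedges X R" "fst (snd (snd e2))" "esrc e2 = u" "chain (etgt e2) t2" "set t2 \<subseteq> dedges X R" "pos t2"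
      using 1 Cons2 by (auto simp: dpaths_def)
    have "(etgt e2, t2) \<in> dpaths X R" using e2' edge_lists[OF RX e2'(1)] by (simp add: dpaths_def)
    then have e2: "e2 \<in> dedges X R" "fst (snd (snd e2))" "esrc e2 = u" "(etgt e2, t2) \<in> dpaths X R" "pos t2"
      using e2' by auto
    obtain r1 r2 where r: "(etgt e1, r1) \<in> dpaths X R" "(etgt e2, r2) \<in> dpaths X R" "pos r1" "pos r2"
      "ptgt (etgt e1) r1 = ptgt (etgt e2) r2" "((u, e1#r1),(u, e2#r2)) \<in> htpy X R Bs"
      using lph 1(2) e1(1-3) e2(1-3) unfolding LPH_def by blast
    define w where "w = ptgt (etgt e1) r1"
    have wX: "w \<in> lists X" using ptgt_lists[OF RX r(1)] w_def by simp
    obtain s where s: "(w,s) \<in> dpaths X R" "pos s" "irr R (ptgt w s)"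
      using ex_pos[OF RX wf wX] by blast
    have st1: "(u, etgt e1) \<in> rstep R" using pos_edge_step[OF e1(1,2)] e1(3) by simp
    have st2: "(u, etgt e2) \<in> rstep R" using pos_edge_step[OF e2(1,2)] e2(3) by simp
    have u1X: "etgt e1 \<in> lists X" and u2X: "etgt e2 \<in> lists X"
      using edge_lists[OF RX e1(1)] edge_lists[OF RX e2(1)] by auto
    have p1: "(etgt e1, r1@s) \<in> dpaths X R" using r(1) s(1) w_def
      by (auto simp: dpaths_def chain_append)
    have p2: "(etgt e2, r2@s) \<in> dpaths X R" using r(2) s(1) w_def r(5)
      by (auto simp: dpaths_def chain_append)
    have t1e: "irr R (ptgt (etgt e1) t1)" using 1(7) Cons by simp
    have t2e: "irr R (ptgt (etgt e2) t2)" using 1(8) Cons2 by simp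
    have pe1: "irr R (ptgt (etgt e1) (r1@s))" using s(3) w_def by (simp add: ptgt_append)
    have pe2: "irr R (ptgt (etgt e2) (r2@s))" using s(3) w_def r(5) by (simp add: ptgt_append)
    have IH1: "((etgt e1, t1), (etgt e1, r1@s)) \<in> htpy X R Bs"
      using 1(1) st1 u1X e1(4) p1 e1(5) r(3) s(2) t1e pe1 by simp
    have IH2: "((etgt e2, t2), (etgt e2, r2@s)) \<in> htpy X R Bs"
      using 1(1) st2 u2X e2(4) p2 e2(5) r(4) s(2) t2e pe2 by simp
    have ed1: "(u,[e1]) \<in> dpaths X R" using e1 1(2) by (auto simp: dpaths_def)
    have ed2: "(u,[e2]) \<in> dpaths X R" using e2 1(2) by (auto simp: dpaths_def)
    have A: "((u, [e1]@t1), (u, [e1]@(r1@s))) \<in> htpy X R Bs"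
      using H_left[OF IH1 ed1 _ e1(4) RX] by simp
    have B: "((u, [e2]@t2), (u, [e2]@(r2@s))) \<in> htpy X R Bs"
      using H_left[OF IH2 ed2 _ e2(4) RX] by simp
    have dC: "(u, e1#r1) \<in> dpaths X R" using ed1 r(1) by (auto simp: dpaths_def)
    have C: "((u, (e1#r1)@s), (u, (e2#r2)@s)) \<in> htpy X R Bs"
      using H_right[OF r(6) dC s(1)] w_def by simp
    have "((u, e1#t1), (u, (e2#r2)@s)) \<in> htpy X R Bs" using H_trans[OF A] C by simp
    then have "((u, e1#t1), (u, e2#t2)) \<in> htpy X R Bs" using H_trans H_sym[OF B] by fastforce
    then show ?thesis using Cons Cons2 by simp
  qed
qed


definition Pos :: "'x set \<Rightarrow> ('x list \<times> 'x list) set \<Rightarrow> 'x list \<Rightarrow> 'x edge list" where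
  "Pos X R w = (SOME es. (w,es) \<in> dpaths X R \<and> pos es \<and> irr R (ptgt w es))"

definition nfp :: "'x set \<Rightarrow> ('x list \<times> 'x list) set \<Rightarrow> 'x list \<Rightarrow> 'x list" where
  "nfp X R w = ptgt w (Pos X R w)"

lemma einv_dir[simp]: "fst (snd (snd (einv e))) = (\<not> fst (snd (snd e)))"
  by (cases e) auto

lemma Pos_ok:
  assumes RX: "R \<subseteq> lists X \<times> lists X" and wf: "wf ((rstep R)\<inverse>)" and w: "w \<in> lists X"
  shows "(w, Pos X R w) \<in> dpaths X R \<and> pos (Pos X R w) \<and> irr R (nfp X R w)"
proof -
  have "\<exists>es. (w,es) \<in> dpaths X R \<and> pos es \<and> irr R (ptgt w es)" using ex_pos[OF RX wf w] .
  then show ?thesis unfolding Pos_def nfp_def by (rule someI_ex)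
qed

lemma nf_edge:
  assumes RX: "R \<subseteq> lists X \<times> lists X" and wf: "wf ((rstep R)\<inverse>)" and conf: "confluent R"
    and e: "e \<in> dedges X R" "esrc e = u" and u: "u \<in> lists X"
  shows "nfp X R (etgt e) = nfp X R u"
proof -
  have u': "etgt e \<in> lists X" using edge_lists[OF RX e(1)] by simp
  have pu: "(u, nfp X R u) \<in> (rstep R)\<^sup>*" "irr R (nfp X R u)"
    using Pos_ok[OF RX wf u] pos_path_rtrancl unfolding nfp_def dpaths_def by blast+
  have pu': "(etgt e, nfp X R (etgt e)) \<in> (rstep R)\<^sup>*" "irr R (nfp X R (etgt e))"
    using Pos_ok[OF RX wf u'] pos_path_rtrancl unfolding nfp_def dpaths_def by blast+
  show ?thesis
  proof (cases "fst (snd (snd e))")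
    case True
    then have "(u, etgt e) \<in> rstep R" using pos_edge_step[OF e(1)] e(2) by simp
    then have "(u, nfp X R (etgt e)) \<in> (rstep R)\<^sup>*" using pu'(1) by (rule converse_rtrancl_into_rtrancl)
    then show ?thesis using unique_nf[OF conf _ pu(1) pu'(2) pu(2)] by simp
  next
    case False
    then have "(etgt e, u) \<in> rstep R" using neg_edge_step[OF e(1)] e(2) by simp
    then have "(etgt e, nfp X R u) \<in> (rstep R)\<^sup>*" using pu(1) by (rule converse_rtrancl_into_rtrancl)
    then show ?thesis using unique_nf[OF conf pu'(1) _ pu'(2) pu(2)] by simp
  qed
qed

lemma nf_path:
  assumes RX: "R \<subseteq> lists X \<times> lists X" and wf: "wf ((rstep R)\<inverse>)" and conf: "confluent R"
  shows "(u,es) \<in> dpaths X R \<Longrightarrow> nfp X R (ptgt u es) = nfp X R u"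
proof (induction es arbitrary: u)
  case Nil then show ?case by simp
next
  case (Cons e es)
  then have e: "e \<in> dedges X R" "esrc e = u" "u \<in> lists X" "chain (etgt e) es" "set es \<subseteq> dedges X R"
    by (auto simp: dpaths_def)
  have "(etgt e, es) \<in> dpaths X R" using e edge_lists[OF RX e(1)] by (simp add: dpaths_def)
  then have "nfp X R (ptgt (etgt e) es) = nfp X R (etgt e)" using Cons.IH by blast
  then show ?case using nf_edge[OF RX wf conf e(1,2,3)] by simp
qed

lemma main_path:
  assumes RX: "R \<subseteq> lists X \<times> lists X" and wf: "wf ((rstep R)\<inverse>)" and conf: "confluent R"
    and lph: "LPH X R Bs"
  shows "(u,es) \<in> dpaths X R \<Longrightarrow>
    ((u,es),(u, Pos X R u @ rev (map einv (Pos X R (ptgt u es))))) \<in> htpy X R Bs"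
proof (induction es arbitrary: u)
  case Nil
  have uX: "u \<in> lists X" using Nil by (simp add: dpaths_def)
  have p: "(u, Pos X R u) \<in> dpaths X R" using Pos_ok[OF RX wf uX] by blast
  have "(pcomp (u, Pos X R u) (pinv (u, Pos X R u)), (pstart (u, Pos X R u), [])) \<in> htpy X R Bs"
    by (rule htpy.inv[OF p])
  then show ?case by (auto simp: pcomp_def pinv_def pstart_def intro: htpy.sym)
next
  case (Cons e t)
  have e: "e \<in> dedges X R" "esrc e = u" "u \<in> lists X" "chain (etgt e) t" "set t \<subseteq> dedges X R"
    using Cons.prems by (auto simp: dpaths_def)
  define u' where "u' = etgt e"
  have u'X: "u' \<in> lists X" using edge_lists[OF RX e(1)] u'_def by simp
  have pt: "(u', t) \<in> dpaths X R" using e u'X u'_def by (simp add: dpaths_def)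
  define v where "v = ptgt u' t"
  have vv: "ptgt u (e#t) = v" using e u'_def v_def by simp
  define IPv where "IPv = rev (map einv (Pos X R v))"
  have IH: "((u',t),(u', Pos X R u' @ IPv)) \<in> htpy X R Bs"
    using Cons.IH[OF pt] v_def IPv_def by simp
  have ed: "(u,[e]) \<in> dpaths X R" using e by (auto simp: dpaths_def)
  have A: "((u, [e]@t),(u, [e]@(Pos X R u' @ IPv))) \<in> htpy X R Bs"
    using H_left[OF IH ed _ pt RX] u'_def by simp
  have Pu: "(u, Pos X R u) \<in> dpaths X R" "pos (Pos X R u)" "irr R (nfp X R u)"
    using Pos_ok[OF RX wf e(3)] by auto
  have Pu': "(u', Pos X R u') \<in> dpaths X R" "pos (Pos X R u')" "irr R (nfp X R u')"
    using Pos_ok[OF RX wf u'X] by auto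
  have dEP: "(u, e # Pos X R u') \<in> dpaths X R"
    using ed Pu'(1) u'_def by (auto simp: dpaths_def)
  have C: "((u, e # Pos X R u'),(u, Pos X R u)) \<in> htpy X R Bs"
  proof (cases "fst (snd (snd e))")
    case True
    show ?thesis
      by (rule squier_P[OF RX wf conf lph e(3) dEP Pu(1)])
         (use True Pu'(2) Pu(2) Pu(3) Pu'(3) u'_def in \<open>auto simp: nfp_def\<close>)
  next
    case False
    define e' where "e' = einv e"
    have e': "e' \<in> dedges X R" "fst (snd (snd e'))" "esrc e' = u'" "etgt e' = u"
      using dedges_einv[OF e(1)] False e(2) u'_def e'_def by auto
    have dE'P: "(u', e' # Pos X R u) \<in> dpaths X R"
      using e' Pu(1) u'X by (auto simp: dpaths_def)
    have S: "((u', e' # Pos X R u),(u', Pos X R u')) \<in> htpy X R Bs"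
      by (rule squier_P[OF RX wf conf lph u'X dE'P Pu'(1)])
         (use e' Pu'(2) Pu(2) Pu(3) Pu'(3) in \<open>auto simp: nfp_def\<close>)
    have S2: "((u, [e] @ (e' # Pos X R u)),(u, [e] @ Pos X R u')) \<in> htpy X R Bs"
      using H_left[OF S ed _ dE'P RX] u'_def by simp
    have "(pcomp (u,[e]) (pinv (u,[e])), (pstart (u,[e]), [])) \<in> htpy X R Bs"
      by (rule htpy.inv[OF ed])
    then have I: "((u,[e,e']),(u,[])) \<in> htpy X R Bs"
      using e(2) by (simp add: pcomp_def pinv_def pstart_def pend_def e'_def)
    have dI: "(u,[e,e']) \<in> dpaths X R" using ed e' by (auto simp: dpaths_def u'_def)
    have I2: "((u,[e,e']@Pos X R u),(u,[]@Pos X R u)) \<in> htpy X R Bs"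
      by (rule H_right[OF I dI Pu(1)]) (use e' in simp)
    show ?thesis using H_trans[OF H_sym[OF S2]] I2 by simp
  qed
  have nfeq: "nfp X R v = nfp X R u'" using nf_path[OF RX wf conf pt] v_def by simp
  have dIP: "(nfp X R u', IPv) \<in> dpaths X R"
  proof -
    have vX: "v \<in> lists X" using ptgt_lists[OF RX pt] v_def by simp
    have Pv: "(v, Pos X R v) \<in> dpaths X R" using Pos_ok[OF RX wf vX] by blast
    have "chain (nfp X R v) IPv" using chain_inv[of v "Pos X R v"] Pv
      unfolding IPv_def nfp_def dpaths_def by blast
    moreover have "set IPv \<subseteq> dedges X R"
    proof -
      have "set (Pos X R v) \<subseteq> dedges X R" using Pv by (simp add: dpaths_def)
      then show ?thesis unfolding IPv_def set_rev set_map using dedges_einv by blast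
    qed
    moreover have "nfp X R v \<in> lists X" using ptgt_lists[OF RX Pv] by (simp add: nfp_def)
    ultimately show ?thesis using nfeq by (simp add: dpaths_def)
  qed
  have D: "((u, (e # Pos X R u') @ IPv),(u, Pos X R u @ IPv)) \<in> htpy X R Bs"
    by (rule H_right[OF C dEP dIP]) (simp add: nfp_def u'_def)
  show ?case using H_trans[OF A] D vv IPv_def by simp
qed

lemma FDT_generic:
  assumes RX: "R \<subseteq> lists X \<times> lists X" and wf: "wf ((rstep R)\<inverse>)" and conf: "confluent R"
    and lph: "LPH X R Bs" and fin: "finite Bs"
    and Bs: "\<forall>(p, q)\<in>Bs. p \<in> dpaths X R \<and> q \<in> dpaths X R \<and> parallel p q"
  shows "FDT_pres X R"
  unfolding FDT_pres_def
proof (intro exI[of _ Bs] conjI ballI impI)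
  fix p q assume p: "p \<in> dpaths X R" and q: "q \<in> dpaths X R" and par: "parallel p q"
  obtain u es1 where pp: "p = (u,es1)" by (cases p)
  obtain u' es2 where qq: "q = (u',es2)" by (cases q)
  have eq: "u' = u" "ptgt u es2 = ptgt u es1" using par pp qq by (auto simp: parallel_def pstart_def pend_def)
  have 1: "((u,es1),(u, Pos X R u @ rev (map einv (Pos X R (ptgt u es1))))) \<in> htpy X R Bs"
    using main_path[OF RX wf conf lph] p pp by blast
  have "((u,es2),(u, Pos X R u @ rev (map einv (Pos X R (ptgt u es2))))) \<in> htpy X R Bs"
    using main_path[OF RX wf conf lph] q qq eq by blast
  then have 2: "((u,es2),(u, Pos X R u @ rev (map einv (Pos X R (ptgt u es1))))) \<in> htpy X R Bs"
    using eq(2) by simp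
  show "(p,q) \<in> htpy X R Bs" using H_trans[OF 1 H_sym[OF 2]] pp qq eq by simp
qed (use fin Bs in auto)


lemma esrc_ectx[simp]: "esrc (ectx x e y) = x @ esrc e @ y"
  by (cases e) auto
lemma etgt_ectx[simp]: "etgt (ectx x e y) = x @ etgt e @ y"
  by (cases e) auto
lemma dir_ectx[simp]: "fst (snd (snd (ectx x e y))) = fst (snd (snd e))"
  by (cases e) auto

lemma chain_ctx: "chain w es \<Longrightarrow> chain (x@w@y) (map (\<lambda>e. ectx x e y) es) \<and>
    ptgt (x@w@y) (map (\<lambda>e. ectx x e y) es) = x @ ptgt w es @ y"
  by (induction es arbitrary: w) auto

lemma dedges_ctx: "e \<in> dedges X R \<Longrightarrow> x \<in> lists X \<Longrightarrow> y \<in> lists X \<Longrightarrow> ectx x e y \<in> dedges X R"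
  by (cases e) (auto simp: dedges_def)

lemma dpaths_ctx:
  assumes "(w,es) \<in> dpaths X R" "x \<in> lists X" "y \<in> lists X"
  shows "pctx x (w,es) y \<in> dpaths X R"
proof -
  have 1: "w \<in> lists X" "set es \<subseteq> dedges X R" "chain w es" using assms(1) by (auto simp: dpaths_def)
  have "\<forall>e\<in>set es. ectx x e y \<in> dedges X R" using 1(2) dedges_ctx[OF _ assms(2,3)] by blast
  then have "set (map (\<lambda>e. ectx x e y) es) \<subseteq> dedges X R" by auto
  then show ?thesis using 1 assms(2,3) chain_ctx[OF 1(3), of x y] by (simp add: dpaths_def pctx_def del: ectx.simps)
qed

lemma pos_ctx: "pos (map (\<lambda>e. ectx x e y) es) = pos es"
  by (induction es) auto

lemma dpaths_tl:
  assumes "R \<subseteq> lists X \<times> lists X" "(w, e#es) \<in> dpaths X R"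
  shows "(etgt e, es) \<in> dpaths X R"
  using assms edge_lists[OF assms(1)] by (auto simp: dpaths_def)

section \<open>The homotopy bases for Rn\<close>

definition c1 :: "nat list \<times> nat list" where "c1 = ([2,1,2,0],[2,0,2,1])"

definition Wp :: "nat \<Rightarrow> nat \<Rightarrow> nat list" where "Wp p q = [2,1,2,0,p,q]"

definition Ap :: "nat \<Rightarrow> nat \<Rightarrow> nat edge list" where
  "Ap p q = ([],c1,True,[p,q]) # ([2,0], ([2,1,p,q],[2,1,2,q]), True, []) #
     (if q = 0 then [([2,0],c1,True,[])] else [])"

definition Bp :: "nat \<Rightarrow> nat \<Rightarrow> nat edge list" where
  "Bp p q = ([2,1], ([2,0,p,q],[2,0,2,q]), True, []) # ([], c1, True, [2,q]) #
     (if q = 0 then [([2,0],c1,True,[])] else [])"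

definition Bsn :: "(nat dpath \<times> nat dpath) set" where
  "Bsn = (\<lambda>(p,q). ((Wp p q, Ap p q), (Wp p q, Bp p q))) ` ({0,1} \<times> {0,1})"

lemma Bsn_fin: "finite Bsn" unfolding Bsn_def by simp

lemma Bsn_ok1:
  assumes "p \<in> {0,1}" "q \<in> {0,1}"
  shows "(Wp p q, Ap p q) \<in> dpaths Xn Rn \<and> (Wp p q, Bp p q) \<in> dpaths Xn Rn \<and>
         pos (Ap p q) \<and> pos (Bp p q) \<and> ptgt (Wp p q) (Ap p q) = ptgt (Wp p q) (Bp p q)"
proof -
  have "p = 0 \<or> p = 1" "q = 0 \<or> q = 1" using assms by auto
  then consider "p = 0" "q = 0" | "p = 0" "q = 1" | "p = 1" "q = 0" | "p = 1" "q = 1" by blast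
  then show ?thesis
    by cases (simp_all add: Wp_def Ap_def Bp_def c1_def dpaths_def dedges_def Rn_explicit Xn_def)
qed

lemma Bsn_ok: "\<forall>(p, q)\<in>Bsn. p \<in> dpaths Xn Rn \<and> q \<in> dpaths Xn Rn \<and> parallel p q"
  unfolding Bsn_def using Bsn_ok1 by (auto simp: parallel_def pstart_def pend_def)

lemma LPH_or:
  assumes u: "u \<in> lists Xn" and e1: "e1 = (x1,(l1,r1),True,y1)" and e2: "e2 = (x2,(l2,r2),True,y2)"
    and R: "(l1,r1)\<in>Rn" "(l2,r2)\<in>Rn" and X: "x1 \<in> lists Xn" "y1 \<in> lists Xn" "x2 \<in> lists Xn" "y2 \<in> lists Xn"
    and eq: "u = x1@l1@y1" "u = x2@l2@y2" and le: "length x1 \<le> length x2"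
  shows "\<exists>rr1 rr2. (etgt e1, rr1) \<in> dpaths Xn Rn \<and> (etgt e2, rr2) \<in> dpaths Xn Rn \<and> pos rr1 \<and> pos rr2 \<and>
        ptgt (etgt e1) rr1 = ptgt (etgt e2) rr2 \<and> ((u, e1#rr1),(u, e2#rr2)) \<in> htpy Xn Rn Bsn"
proof -
  have RX: "Rn \<subseteq> lists Xn \<times> lists Xn" by (rule Rn_lists)
  have lX: "l1 \<in> lists Xn" "r1 \<in> lists Xn" "l2 \<in> lists Xn" "r2 \<in> lists Xn" using R RX by auto
  have E: "x1@l1@y1 = x2@l2@y2" using eq by simp
  have D: "(x1 = x2 \<and> l1 = l2 \<and> r1 = r2 \<and> y1 = y2) \<or> (\<exists>m. x2 = x1@l1@m \<and> y1 = m@l2@y2) \<or>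
    (\<exists>p q. p \<in> {0,1} \<and> q \<in> {0,1} \<and> l1=[2,1,2,0] \<and> r1 = [2,0,2,1] \<and> l2 = [2,0,p,q] \<and>
       r2 = [2,0,2,q] \<and> x2 = x1 @ [2,1] \<and> y1 = [p,q]@y2)" by (rule peak_Rn[OF E R le])
  then consider "x1 = x2 \<and> l1 = l2 \<and> r1 = r2 \<and> y1 = y2" | "\<exists>m. x2 = x1@l1@m \<and> y1 = m@l2@y2" |
    "\<exists>p q. p \<in> {0,1} \<and> q \<in> {0,1} \<and> l1=[2,1,2,0] \<and> r1 = [2,0,2,1] \<and> l2 = [2,0,p,q] \<and>
       r2 = [2,0,2,q] \<and> x2 = x1 @ [2,1] \<and> y1 = [p,q]@y2" by argo
  then show ?thesis
  proof cases
    case 1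
    then have ee: "e1 = e2" using e1 e2 by simp
    have ed: "(u,[e1]) \<in> dpaths Xn Rn" using e1 R X eq u by (auto simp: dpaths_def dedges_def)
    have "(etgt e1, []) \<in> dpaths Xn Rn" using dpaths_tl[OF RX ed] .
    then show ?thesis using ee htpy.refl[OF ed] by (intro exI[of _ "[]"]) auto
  next
    case 2
    then obtain m where m: "x2 = x1@l1@m" "y1 = m@l2@y2" by blast
    have mX: "m \<in> lists Xn" using X(3) m by simp
    define E1 where "E1 = (x1, (l1,r1), True, [] :: nat list)"
    define E2 where "E2 = (m, (l2,r2), True, y2)"
    have dE: "E1 \<in> dedges Xn Rn" "E2 \<in> dedges Xn Rn" using R X mX by (auto simp: E1_def E2_def dedges_def)
    have H: "((esrc E1 @ esrc E2, [ectx [] E1 (esrc E2), ectx (etgt E1) E2 []]),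
          (esrc E1 @ esrc E2, [ectx (esrc E1) E2 [], ectx [] E1 (etgt E2)])) \<in> htpy Xn Rn Bsn"
      by (rule htpy.indep[OF dE])
    define rr1 where "rr1 = [(x1@r1@m, (l2,r2), True, y2)]"
    define rr2 where "rr2 = [(x1, (l1,r1), True, m@r2@y2)]"
    have H': "((u, e1#rr1),(u, e2#rr2)) \<in> htpy Xn Rn Bsn"
      using H by (simp add: E1_def E2_def rr1_def rr2_def e1 e2 m eq)
    have d1: "(etgt e1, rr1) \<in> dpaths Xn Rn"
      using e1 m X mX R lX by (auto simp: rr1_def dpaths_def dedges_def)
    have d2: "(etgt e2, rr2) \<in> dpaths Xn Rn"
      using e2 m X mX R lX by (auto simp: rr2_def dpaths_def dedges_def)
    have "ptgt (etgt e1) rr1 = ptgt (etgt e2) rr2" using e1 e2 m by (simp add: rr1_def rr2_def)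
    then show ?thesis using H' d1 d2 by (intro exI[of _ rr1] exI[of _ rr2]) (auto simp: rr1_def rr2_def)
  next
    case 3
    then obtain p q where pq: "p \<in> {0,1}" "q \<in> {0,1}" "l1=[2,1,2,0]" "r1 = [2,0,2,1]" "l2 = [2,0,p,q]"
      "r2 = [2,0,2,q]" "x2 = x1 @ [2,1]" "y1 = [p,q]@y2" by blast
    have inB: "((Wp p q, Ap p q), (Wp p q, Bp p q)) \<in> Bsn" using pq(1,2) unfolding Bsn_def by force
    have H: "(pctx x1 (Wp p q, Ap p q) y2, pctx x1 (Wp p q, Bp p q) y2) \<in> htpy Xn Rn Bsn"
      by (rule htpy.ctx[OF htpy.base[OF inB] X(1,4)])
    define f where "f = (\<lambda>e. ectx x1 e y2)"
    have ok: "(Wp p q, Ap p q) \<in> dpaths Xn Rn" "(Wp p q, Bp p q) \<in> dpaths Xn Rn" "pos (Ap p q)" "pos (Bp p q)"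
      "ptgt (Wp p q) (Ap p q) = ptgt (Wp p q) (Bp p q)" using Bsn_ok1[OF pq(1,2)] by auto
    have dA: "pctx x1 (Wp p q, Ap p q) y2 \<in> dpaths Xn Rn" by (rule dpaths_ctx[OF ok(1) X(1,4)])
    have dB: "pctx x1 (Wp p q, Bp p q) y2 \<in> dpaths Xn Rn" by (rule dpaths_ctx[OF ok(2) X(1,4)])
    obtain a0 As where A: "Ap p q = a0 # As" by (simp add: Ap_def)
    obtain b0 Bs' where B: "Bp p q = b0 # Bs'" by (simp add: Bp_def)
    have "a0 = ([],c1,True,[p,q])" using A by (simp add: Ap_def)
    then have fa0: "f a0 = e1" using pq e1 by (simp add: f_def c1_def)
    have "b0 = ([2,1], ([2,0,p,q],[2,0,2,q]), True, [])" using B by (simp add: Bp_def)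
    then have fb0: "f b0 = e2" using pq e2 by (simp add: f_def)
    have uW: "u = x1 @ Wp p q @ y2" using eq pq by (simp add: Wp_def)
    have pA: "pctx x1 (Wp p q, Ap p q) y2 = (u, e1 # map f As)" using A fa0 uW by (simp add: pctx_def f_def)
    have pB: "pctx x1 (Wp p q, Bp p q) y2 = (u, e2 # map f Bs')" using B fb0 uW by (simp add: pctx_def f_def)
    have d1: "(etgt e1, map f As) \<in> dpaths Xn Rn" using dpaths_tl[OF RX] dA pA by metis
    have d2: "(etgt e2, map f Bs') \<in> dpaths Xn Rn" using dpaths_tl[OF RX] dB pB by metis
    have ps: "pos (map f As)" "pos (map f Bs')" using ok(3,4) A B pos_ctx unfolding f_def by auto
    have chA: "chain (Wp p q) (Ap p q)" and chB: "chain (Wp p q) (Bp p q)" using ok(1,2) by (auto simp: dpaths_def)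
    have "ptgt u (e1 # map f As) = ptgt u (e2 # map f Bs')"
      using chain_ctx[OF chA, of x1 y2] chain_ctx[OF chB, of x1 y2] ok(5) pA pB uW
      by (simp add: pctx_def f_def)
    then have "ptgt (etgt e1) (map f As) = ptgt (etgt e2) (map f Bs')" by simp
    then show ?thesis using H pA pB d1 d2 ps by (intro exI[of _ "map f As"] exI[of _ "map f Bs'"]) auto
  qed
qed

lemma LPH_Rn: "LPH Xn Rn Bsn"
  unfolding LPH_def
proof (intro allI impI)
  fix u e1 e2 assume u: "u \<in> lists Xn" and d: "e1 \<in> dedges Xn Rn" "e2 \<in> dedges Xn Rn"
    and p: "fst (snd (snd e1))" "fst (snd (snd e2))" and s: "esrc e1 = u" "esrc e2 = u"
  obtain x1 l1 r1 y1 where e1: "e1 = (x1,(l1,r1),True,y1)" using p(1) by (cases e1) auto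
  obtain x2 l2 r2 y2 where e2: "e2 = (x2,(l2,r2),True,y2)" using p(2) by (cases e2) auto
  have R: "(l1,r1)\<in>Rn" "(l2,r2)\<in>Rn" and X: "x1 \<in> lists Xn" "y1 \<in> lists Xn" "x2 \<in> lists Xn" "y2 \<in> lists Xn"
    using d e1 e2 by (auto simp: dedges_def)
  have eq: "u = x1@l1@y1" "u = x2@l2@y2" using s e1 e2 by auto
  show "\<exists>r1 r2. (etgt e1, r1) \<in> dpaths Xn Rn \<and> (etgt e2, r2) \<in> dpaths Xn Rn \<and> pos r1 \<and> pos r2 \<and>
        ptgt (etgt e1) r1 = ptgt (etgt e2) r2 \<and> ((u, e1#r1),(u, e2#r2)) \<in> htpy Xn Rn Bsn"
  proof (cases "length x1 \<le> length x2")
    case True then show ?thesis using LPH_or[OF u e1 e2 R X eq] by blast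
  next
    case False
    then have "length x2 \<le> length x1" by simp
    from LPH_or[OF u e2 e1 R(2,1) X(3,4,1,2) eq(2,1) this] obtain rr2 rr1 where
      "(etgt e2, rr2) \<in> dpaths Xn Rn" "(etgt e1, rr1) \<in> dpaths Xn Rn" "pos rr2" "pos rr1"
      "ptgt (etgt e2) rr2 = ptgt (etgt e1) rr1" "((u, e2#rr2),(u, e1#rr1)) \<in> htpy Xn Rn Bsn" by blast
    then show ?thesis using htpy.sym by metis
  qed
qed

lemma FDT_R0: "FDT (UNIV :: letter set) R0"
proof -
  have "FDT_pres Xn Rn"
    by (rule FDT_generic[OF Rn_lists _ conf_Rn LPH_Rn Bsn_fin Bsn_ok])
       (use noeth_Rn in \<open>simp add: noetherian_def\<close>)
  then show ?thesis unfolding FDT_def using fin_pres_Rn pres_Rn by blast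
qed


lemma regular_gen:
  fixes \<delta> :: "'q \<Rightarrow> 's \<Rightarrow> 'q"
  assumes fin: "finite Q" and q0: "q0 \<in> Q" and cl: "\<forall>q\<in>Q. \<forall>s. \<delta> q s \<in> Q"
  shows "regular {w. foldl \<delta> q0 w \<in> F}"
proof -
  obtain f :: "'q \<Rightarrow> nat" and n where f: "f ` Q = {i. i < n}" "inj_on f Q"
    using finite_imp_inj_to_nat_seg[OF fin] by blast
  define g where "g = the_inv_into Q f"
  have gf: "g (f q) = q" if "q \<in> Q" for q using the_inv_into_f_f[OF f(2) that] g_def by simp
  define \<delta>' where "\<delta>' k s = f (\<delta> (g k) s)" for k s
  have run: "foldl \<delta>' (f q) w = f (foldl \<delta> q w) \<and> foldl \<delta> q w \<in> Q" if "q \<in> Q" for q w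
    using that
  proof (induction w arbitrary: q)
    case Nil then show ?case by simp
  next
    case (Cons s w)
    have "\<delta>' (f q) s = f (\<delta> q s)" using gf[OF Cons.prems] by (simp add: \<delta>'_def)
    moreover have "\<delta> q s \<in> Q" using cl Cons.prems by blast
    ultimately show ?case using Cons.IH[of "\<delta> q s"] by simp
  qed
  have eq: "{w. foldl \<delta> q0 w \<in> F} = {w. foldl \<delta>' (f q0) w \<in> f ` (F \<inter> Q)}"
  proof (rule set_eqI)
    fix w
    have r: "foldl \<delta>' (f q0) w = f (foldl \<delta> q0 w)" "foldl \<delta> q0 w \<in> Q" using run[OF q0] by auto
    have "f (foldl \<delta> q0 w) \<in> f ` (F \<inter> Q) \<longleftrightarrow> foldl \<delta> q0 w \<in> F \<inter> Q"
      using inj_on_image_mem_iff[OF f(2) r(2)] by auto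
    then show "w \<in> {w. foldl \<delta> q0 w \<in> F} \<longleftrightarrow> w \<in> {w. foldl \<delta>' (f q0) w \<in> f ` (F \<inter> Q)}"
      using r by auto
  qed
  have "finite (f ` Q)" using fin by simp
  moreover have "f q0 \<in> f ` Q" using q0 by simp
  moreover have "\<forall>k\<in>f ` Q. \<forall>s. \<delta>' k s \<in> f ` Q"
    using gf cl by (auto simp: \<delta>'_def)
  moreover have "f ` (F \<inter> Q) \<subseteq> f ` Q" by auto
  ultimately show ?thesis unfolding regular_def eq by blast
qed

lemma regular_image:
  fixes h :: "'s \<Rightarrow> 't"
  assumes reg: "regular K" and inj: "inj h"
  shows "regular (map h ` K)"
proof -
  obtain Q :: "nat set" and q0 \<delta> F where Q: "finite Q" "q0 \<in> Q" "\<forall>q\<in>Q. \<forall>s. \<delta> q s \<in> Q"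
    and K: "K = {w. foldl \<delta> q0 w \<in> F}"
    using reg unfolding regular_def by blast
  define \<delta>' where "\<delta>' qo t = (case qo of None \<Rightarrow> None |
      Some q \<Rightarrow> (if t \<in> range h then Some (\<delta> q (inv h t)) else None))" for qo t
  have run: "foldl \<delta>' (Some q) w = (if set w \<subseteq> range h then Some (foldl \<delta> q (map (inv h) w)) else None)" for q w
  proof (induction w arbitrary: q)
    case Nil then show ?case by simp
  next
    case (Cons t w)
    have none: "foldl \<delta>' None w = None" for w by (induction w) (auto simp: \<delta>'_def)
    show ?case
    proof (cases "t \<in> range h")
      case True then show ?thesis using Cons.IH by (simp add: \<delta>'_def)
    next
      case False
      then have "\<delta>' (Some q) t = None" by (simp add: \<delta>'_def)
      then show ?thesis using False none by simp
    qed
  qed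
  have eq: "map h ` K = {w. foldl \<delta>' (Some q0) w \<in> Some ` F}"
  proof (rule set_eqI)
    fix w
    show "w \<in> map h ` K \<longleftrightarrow> w \<in> {w. foldl \<delta>' (Some q0) w \<in> Some ` F}"
    proof
      assume "w \<in> map h ` K"
      then obtain k where k: "k \<in> K" "w = map h k" by blast
      have "map (inv h) w = k" using k(2) inj by (simp add: inv_f_f)
      then show "w \<in> {w. foldl \<delta>' (Some q0) w \<in> Some ` F}" using k K run[of q0 w] by auto
    next
      assume "w \<in> {w. foldl \<delta>' (Some q0) w \<in> Some ` F}"
      then have s: "set w \<subseteq> range h" "foldl \<delta> q0 (map (inv h) w) \<in> F"
        using run[of q0 w] by (auto split: if_splits)
      have "map h (map (inv h) w) = w" using s(1) by (induction w) (auto simp: f_inv_into_f)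
      then show "w \<in> map h ` K" using s(2) K by (metis (mono_tags, lifting) image_eqI mem_Collect_eq)
    qed
  qed
  have cl: "\<forall>qo\<in>insert None (Some ` Q). \<forall>t. \<delta>' qo t \<in> insert None (Some ` Q)"
    using Q(3) by (auto simp: \<delta>'_def)
  show ?thesis unfolding eq by (rule regular_gen[of "insert None (Some ` Q)"]) (use Q cl in auto)
qed


section \<open>Irreducible words for R0\<close>

definition Lh :: "letter list set" where "Lh = fst ` R0"

lemma Lh_explicit: "Lh = {[c,b,a,b], [c,b,b,b], [c,b,c,a], [c,b,a,a], [c,b,b,a], [c,a,a,b],
         [c,a,b,b], [c,a,a,a], [c,a,b,a]}"
  unfolding Lh_def R0_def by simp

lemma Lh_len: "l \<in> Lh \<Longrightarrow> length l = 4" unfolding Lh_explicit by auto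
lemma Lh_last: "l \<in> Lh \<Longrightarrow> last l \<noteq> c" unfolding Lh_explicit by auto
lemma Lh_second: "l \<in> Lh \<Longrightarrow> l!1 \<noteq> c" unfolding Lh_explicit by auto
lemma Lh_first: "l \<in> Lh \<Longrightarrow> l!0 = c" unfolding Lh_explicit by auto
lemma Lh_third: "l \<in> Lh \<Longrightarrow> l!2 = c \<Longrightarrow> l = [c,b,c,a]" unfolding Lh_explicit by auto

abbreviation irr0 :: "letter list \<Rightarrow> bool" where "irr0 \<equiv> irr R0"

lemma Lh_iff: "l \<in> Lh \<longleftrightarrow> (\<exists>r. (l,r) \<in> R0)"
  unfolding Lh_def by force

lemma irr_iff: "irr0 w \<longleftrightarrow> \<not>(\<exists>x l y. w = x@l@y \<and> l \<in> Lh)"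
proof
  assume H: "irr0 w"
  show "\<not>(\<exists>x l y. w = x@l@y \<and> l \<in> Lh)"
  proof
    assume "\<exists>x l y. w = x@l@y \<and> l \<in> Lh"
    then obtain x l y r where "w = x@l@y" "(l,r) \<in> R0" unfolding Lh_iff by blast
    then have "(w, x@r@y) \<in> rstep R0" using rstepI by blast
    then show False using H unfolding irr_def by blast
  qed
next
  assume H: "\<not>(\<exists>x l y. w = x@l@y \<and> l \<in> Lh)"
  show "irr0 w" unfolding irr_def
  proof (intro allI notI)
    fix w' assume "(w,w') \<in> rstep R0"
    then obtain x l r y where "w = x@l@y" "(l,r) \<in> R0" by (auto elim: rstepE)
    then show False using H unfolding Lh_iff by blast
  qed
qed

definition last3 :: "letter list \<Rightarrow> letter list" where "last3 w = drop (length w - 3) w"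

lemma last3_len: "length (last3 w) \<le> 3" by (simp add: last3_def)

lemma last3_snoc: "last3 (last3 p @ [x]) = last3 (p@[x])"
proof (cases "length p \<le> 3")
  case True then show ?thesis by (simp add: last3_def)
next
  case False then have "Suc (length p - 3) = length p - 2" by arith
  then show ?thesis using False by (simp add: last3_def)
qed

lemma irr_prefix: "irr0 (p@q) \<Longrightarrow> irr0 p"
proof -
  assume H: "irr0 (p@q)"
  show "irr0 p" unfolding irr_iff
  proof
    assume "\<exists>x l y. p = x@l@y \<and> l \<in> Lh"
    then obtain x l y where "p = x@l@y" "l \<in> Lh" by blast
    then have "p@q = x@l@(y@q)" "l \<in> Lh" by auto
    then show False using H unfolding irr_iff by blast
  qed
qed

lemma irr_suffix: "irr0 (p@q) \<Longrightarrow> irr0 q"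
proof -
  assume H: "irr0 (p@q)"
  show "irr0 q" unfolding irr_iff
  proof
    assume "\<exists>x l y. q = x@l@y \<and> l \<in> Lh"
    then obtain x l y where "q = x@l@y" "l \<in> Lh" by blast
    then have "p@q = (p@x)@l@y" "l \<in> Lh" by auto
    then show False using H unfolding irr_iff by blast
  qed
qed

lemma irr_Nil[simp]: "irr0 []"
proof -
  have "\<not>(\<exists>x l y. [] = x@l@y \<and> l \<in> Lh)"
  proof
    assume "\<exists>x l y. [] = x@l@y \<and> l \<in> Lh"
    then obtain x l y where "[] = x@l@y" "l \<in> Lh" by blast
    then show False using Lh_len[of l] by simp
  qed
  then show ?thesis unfolding irr_iff .
qed

lemma irr_snoc: "irr0 (p@[x]) \<longleftrightarrow> irr0 p \<and> last3 p @ [x] \<notin> Lh"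
proof
  assume H: "irr0 (p@[x])"
  then have "irr0 p" by (rule irr_prefix)
  moreover have "last3 p @ [x] \<notin> Lh"
  proof
    assume "last3 p @ [x] \<in> Lh"
    moreover have "p@[x] = take (length p - 3) p @ (last3 p @ [x]) @ []"
      by (simp add: last3_def)
    ultimately show False using H unfolding irr_iff by blast
  qed
  ultimately show "irr0 p \<and> last3 p @ [x] \<notin> Lh" by simp
next
  assume H: "irr0 p \<and> last3 p @ [x] \<notin> Lh"
  show "irr0 (p@[x])" unfolding irr_iff
  proof
    assume "\<exists>X l Y. p@[x] = X@l@Y \<and> l \<in> Lh"
    then obtain X l Y where XY: "p@[x] = X@l@Y" "l \<in> Lh" by blast
    have l4: "length l = 4" using Lh_len XY(2) by simp
    show False
    proof (cases Y rule: rev_cases)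
      case Nil
      then have "X@l = p@[x]" using XY by simp
      then have eqX: "X@l = p@[x]" .
      have "length (X@l) = length (p@[x])" using eqX by simp
      then have lens: "length X + 4 = length p + 1" using l4 by simp
      have "drop (length X) (X@l) = drop (length X) (p@[x])" using eqX by simp
      then have "l = drop (length X) (p@[x])" by simp
      moreover have "length X = length p - 3" using lens by arith
      ultimately have "l = drop (length p - 3) p @ [x]" by simp
      then show False using H XY(2) by (simp add: last3_def)
    next
      case (snoc Y' y)
      then have "p = X@l@Y'" using XY by simp
      then show False using H XY(2) unfolding irr_iff by blast
    qed
  qed
qed

lemma irr_app_c: "irr0 p \<Longrightarrow> irr0 (p@[c])"
proof -
  assume p: "irr0 p"
  have "last3 p @ [c] \<notin> Lh"
  proof
    assume "last3 p @ [c] \<in> Lh"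
    from Lh_last[OF this] show False by simp
  qed
  then show ?thesis using p irr_snoc by blast
qed

definition ends_cb :: "letter list \<Rightarrow> bool" where "ends_cb p \<longleftrightarrow> (\<exists>q. p = q@[c,b])"

lemma last3_app2: "last3 (p@[x,y]) = (if p = [] then [x,y] else [last p, x, y])"
  unfolding last3_def by (cases p rule: rev_cases) auto

lemma irr_app_cb: "irr0 p \<Longrightarrow> irr0 (p@[c,b])"
proof -
  assume p: "irr0 p"
  have 1: "irr0 (p@[c])" using irr_app_c[OF p] .
  have "last3 (p@[c]) @ [b] \<notin> Lh"
  proof
    assume H: "last3 (p@[c]) @ [b] \<in> Lh"
    then have "length (last3 (p@[c])) = 3" using Lh_len[OF H] by simp
    then have "(last3 (p@[c]) @ [b]) ! 2 = c" by (simp add: last3_def nth_append)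
    then show False using Lh_third[OF H] by simp
  qed
  then show ?thesis using 1 irr_snoc[of "p@[c]" b] by simp
qed

lemma irr_app_ca: "irr0 p \<Longrightarrow> \<not> ends_cb p \<Longrightarrow> irr0 (p@[c,a])"
proof -
  assume p: "irr0 p" and ne: "\<not> ends_cb p"
  have 1: "irr0 (p@[c])" using irr_app_c[OF p] .
  have "last3 (p@[c]) @ [a] \<notin> Lh"
  proof
    assume H: "last3 (p@[c]) @ [a] \<in> Lh"
    then have "length (last3 (p@[c])) = 3" using Lh_len[OF H] by simp
    then have "(last3 (p@[c]) @ [a]) ! 2 = c" by (simp add: last3_def nth_append)
    then have "last3 (p@[c]) = [c,b,c]" using Lh_third[OF H] by simp
    moreover have "p@[c] = take (length (p@[c]) - 3) (p@[c]) @ last3 (p@[c])"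
      unfolding last3_def by simp
    ultimately have "p@[c] = (take (length (p@[c]) - 3) (p@[c]) @ [c,b]) @ [c]" by simp
    then have "p = take (length (p@[c]) - 3) (p@[c]) @ [c,b]" using append1_eq_conv by blast
    then have "ends_cb p" unfolding ends_cb_def by blast
    then show False using ne by simp
  qed
  then show ?thesis using 1 irr_snoc[of "p@[c]" a] by simp
qed

lemma cbp_comm: "cbp k @ [c,b] = [c,b] @ cbp k"
  by (metis concat_rep_snoc concat.simps(2) replicate_Suc)

lemma irr_app_cbp: "irr0 p \<Longrightarrow> irr0 (p @ cbp k)"
proof (induction k)
  case 0 then show ?case by simp
next
  case (Suc k)
  then have "irr0 ((p @ cbp k) @ [c,b])" using irr_app_cb by blast
  then show ?case by (simp add: cbp_comm)
qed

lemma irr_app_y: "irr0 (p@[c,z]) \<Longrightarrow> irr0 (p@[c,z,y])"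
proof -
  assume H: "irr0 (p@[c,z])"
  have "last3 (p@[c,z]) @ [y] \<notin> Lh"
  proof
    assume L: "last3 (p@[c,z]) @ [y] \<in> Lh"
    show False
    proof (cases "p = []")
      case True then show False using Lh_len[OF L] by (simp add: last3_def)
    next
      case False then show False using Lh_second[OF L] by (simp add: last3_app2)
    qed
  qed
  then show ?thesis using H irr_snoc[of "p@[c,z]" y] by simp
qed

lemma ends_cb_decomp: "\<exists>w' k. w = w' @ cbp k \<and> \<not> ends_cb w'"
proof (induction "length w" arbitrary: w rule: less_induct)
  case less
  show ?case
  proof (cases "ends_cb w")
    case False then show ?thesis by (intro exI[of _ w] exI[of _ 0]) simp
  next
    case True
    then obtain q where q: "w = q@[c,b]" unfolding ends_cb_def by blast
    have "length q < length w" using q by simp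
    then obtain w' k where "q = w' @ cbp k" "\<not> ends_cb w'" using less by blast
    then show ?thesis using q by (intro exI[of _ w'] exI[of _ "Suc k"]) (simp add: cbp_comm)
  qed
qed

lemma CR: "(s,t) \<in> congr R0 \<Longrightarrow> \<exists>z. (s,z) \<in> (rstep R0)\<^sup>* \<and> (t,z) \<in> (rstep R0)\<^sup>*"
  unfolding congr_def
proof (induction rule: rtrancl_induct)
  case base then show ?case by blast
next
  case (step y z)
  then obtain z0 where z0: "(s,z0) \<in> (rstep R0)\<^sup>*" "(y,z0) \<in> (rstep R0)\<^sup>*" by blast
  show ?case
  proof (cases "(y,z) \<in> rstep R0")
    case True
    then have "(y,z) \<in> (rstep R0)\<^sup>*" by blast
    then obtain z1 where "(z,z1) \<in> (rstep R0)\<^sup>*" "(z0,z1) \<in> (rstep R0)\<^sup>*"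
      using conf_R0 z0(2) unfolding confluent_def by blast
    then show ?thesis using z0(1) by (meson rtrancl_trans)
  next
    case False
    then have "(z,y) \<in> rstep R0" using step by blast
    then show ?thesis using z0 by (meson converse_rtrancl_into_rtrancl)
  qed
qed

lemma irr_congr_eq: "(s,t) \<in> congr R0 \<Longrightarrow> irr0 s \<Longrightarrow> irr0 t \<Longrightarrow> s = t"
  using CR irr_rtrancl by metis

lemma ex_nf: "\<exists>n. (w,n) \<in> (rstep R0)\<^sup>* \<and> irr0 n"
proof (induction w rule: wf_induct[OF noeth_R0[unfolded noetherian_def]])
  case (1 w)
  show ?case
  proof (cases "irr0 w")
    case True then show ?thesis by blast
  next
    case False
    then obtain v where "(w,v) \<in> rstep R0" unfolding irr_def by blast
    then show ?thesis using 1 by (meson converse_rtrancl_into_rtrancl converseI)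
  qed
qed

lemma rel_char:
  assumes "(w, N) \<in> (rstep R0)\<^sup>*" "irr0 N"
  shows "((w, v) \<in> congr R0 \<and> irr0 v) \<longleftrightarrow> v = N"
proof
  assume H: "(w, v) \<in> congr R0 \<and> irr0 v"
  have "(N, v) \<in> congr R0" using congr_trans[OF congr_sym[OF rtrancl_congr[OF assms(1)]]] H by blast
  then show "v = N" using irr_congr_eq assms(2) H by metis
next
  assume "v = N" then show "(w, v) \<in> congr R0 \<and> irr0 v" using assms rtrancl_congr by blast
qed

lemma R0_rt: "(l,r)\<in>R0 \<Longrightarrow> (x@l@y, x@r@y) \<in> (rstep R0)\<^sup>*"
  using rstepI by blast

lemma swap1r: "(cbp n @ [c,a], [c,a] @ cbp n) \<in> (rstep R0)\<^sup>*"
proof (induction n)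
  case 0 then show ?case by simp
next
  case (Suc n)
  have "(cbp n @ [c,b,c,a] @ [], cbp n @ [c,a,c,b] @ []) \<in> (rstep R0)\<^sup>*"
    by (rule R0_rt) (simp add: R0_def)
  moreover have "cbp (Suc n) @ [c,a] = cbp n @ [c,b,c,a] @ []"
    by (subst concat_rep_snoc) simp
  ultimately have 1: "(cbp (Suc n) @ [c,a], (cbp n @ [c,a]) @ [c,b]) \<in> (rstep R0)\<^sup>*"
    by simp
  have 2: "((cbp n @ [c,a]) @ [c,b], ([c,a] @ cbp n) @ [c,b]) \<in> (rstep R0)\<^sup>*"
    using rtrancl_ctx[OF Suc.IH, of "[]" "[c,b]"] by simp
  have 3: "([c,a] @ cbp n) @ [c,b] = [c,a] @ cbp (Suc n)"
    by (subst concat_rep_snoc) simp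
  show ?case using rtrancl_trans[OF 1 2] 3 by simp
qed

lemma nfA_C:
  assumes "y \<in> {a,b,c}"
  shows "(w' @ cbp k @ [c,b,y] @ [a], w' @ [c,a] @ cbp (Suc k)) \<in> (rstep R0)\<^sup>*"
proof -
  have s1: "(w' @ cbp k @ [c,b,y] @ [a], w' @ cbp k @ [c,b,c,a]) \<in> (rstep R0)\<^sup>*"
  proof (cases "y = c")
    case True then show ?thesis by simp
  next
    case False
    then have "([c,b,y,a],[c,b,c,a]) \<in> R0" using assms by (auto simp: R0_def)
    then show ?thesis using R0_rt[of "[c,b,y,a]" "[c,b,c,a]" "w' @ cbp k" "[]"] by simp
  qed
  have s2: "(w' @ cbp k @ [c,b,c,a], w' @ (cbp k @ [c,a]) @ [c,b]) \<in> (rstep R0)\<^sup>*"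
    using R0_rt[of "[c,b,c,a]" "[c,a,c,b]" "w' @ cbp k" "[]"] by (simp add: R0_def)
  have s3: "(w' @ (cbp k @ [c,a]) @ [c,b], w' @ ([c,a] @ cbp k) @ [c,b]) \<in> (rstep R0)\<^sup>*"
    by (rule rtrancl_ctx[OF swap1r])
  have e: "w' @ ([c,a] @ cbp k) @ [c,b] = w' @ [c,a] @ cbp (Suc k)"
    by (subst concat_rep_snoc) simp
  show ?thesis using rtrancl_trans[OF rtrancl_trans[OF s1 s2] s3] e by simp
qed

lemma irr_C_res:
  assumes "irr0 w'" "\<not> ends_cb w'"
  shows "irr0 (w' @ [c,a] @ cbp k)"
  using irr_app_cbp[OF irr_app_ca[OF assms]] by simp

lemma irr_C_src:
  assumes "irr0 w'"
  shows "irr0 (w' @ cbp k @ [c,b,y])"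
proof -
  have "irr0 ((w' @ cbp k) @ [c,b])" using irr_app_cb irr_app_cbp[OF assms] by blast
  then show ?thesis using irr_app_y[of "w' @ cbp k" b y] by simp
qed


definition diag :: "letter list \<Rightarrow> (letter option \<times> letter option) list" where
  "diag w = map (\<lambda>x. (Some x, Some x)) w"

lemma diag_append[simp]: "diag (u@v) = diag u @ diag v" by (simp add: diag_def)
lemma diag_Nil[simp]: "diag [] = []" by (simp add: diag_def)
lemma diag_Cons[simp]: "diag (x#u) = (Some x, Some x) # diag u" by (simp add: diag_def)

lemma deltaR_prefix: "deltaR (p@u) (p@v) = diag p @ deltaR u v"
proof (rule nth_equalityI)
  show "length (deltaR (p@u) (p@v)) = length (diag p @ deltaR u v)"
    by (simp add: deltaR_len diag_def)
next
  fix j assume j: "j < length (deltaR (p@u) (p@v))"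
  then have j1: "j < max (length (p@u)) (length (p@v))" by (simp add: deltaR_len)
  show "deltaR (p@u) (p@v) ! j = (diag p @ deltaR u v) ! j"
  proof (cases "j < length p")
    case True then show ?thesis using deltaR_nth[OF j1] by (simp add: nth_append diag_def)
  next
    case False
    then have j2: "j - length p < max (length u) (length v)" using j1 by simp
    have e1: "(j < length p + length u) = (j - length p < length u)" using False by arith
    have e2: "(j < length p + length v) = (j - length p < length v)" using False by arith
    show ?thesis using False deltaR_nth[OF j1] deltaR_nth[OF j2] by (simp add: nth_append diag_def e1 e2)
  qed
qed

lemma deltaR_same: "deltaR u u = diag u"
  using deltaR_prefix[of u "[]" "[]"] by (simp add: deltaR_def)

section \<open>The automaton\<close>

datatype st2 = D "letter list" | Casc | CascC | E2 | E3 | Fin | Dead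

fun dstep :: "letter option \<Rightarrow> st2 \<Rightarrow> letter option \<times> letter option \<Rightarrow> st2" where
  "dstep g (D L) (Some x, Some y) = (if x = y then (if L@[x] \<in> Lh then Dead else D (last3 (L@[x])))
      else (if g = Some a \<and> x = b \<and> y = a \<and> (\<exists>L0. L = L0@[c]) \<and> L \<noteq> [c,b,c] then Casc
      else if g = Some a \<and> x \<noteq> c \<and> y = c \<and> (\<exists>L0. L = L0@[c,a]) then E2
      else if g = Some b \<and> x \<noteq> c \<and> y = c \<and> (\<exists>L0 p. L = L0@[c,p] \<and> p \<noteq> c) then E3
      else Dead))"
| "dstep g (D L) (None, Some z) = (if g = Some z \<and> L@[z] \<notin> Lh then Fin else Dead)"
| "dstep g Casc (Some x, Some y) = (if x = c \<and> y = c then CascC else if x \<noteq> c \<and> y = c then E3 else Dead)"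
| "dstep g CascC (Some x, Some y) = (if x = b \<and> y = b then Casc else Dead)"
| "dstep g CascC (None, Some y) = (if y = b then Fin else Dead)"
| "dstep g E3 (None, Some y) = (if y = b then Fin else Dead)"
| "dstep g E2 (None, Some y) = (if y = a then Fin else Dead)"
| "dstep g _ _ = Dead"

definition Fs :: "letter option \<Rightarrow> st2 set" where
  "Fs g = (if g = None then range D else {Fin})"

lemma dead_run[simp]: "foldl (dstep g) Dead t = Dead"
  by (induction t) auto

lemma fin_run: "foldl (dstep g) Fin t = (if t = [] then Fin else Dead)"
  by (cases t) auto

lemma e3_run: "foldl (dstep g) E3 t = Fin \<longleftrightarrow> t = [(None, Some b)]"
proof (cases t)
  case Nil then show ?thesis by simp
next
  case (Cons p t')
  then show ?thesis
  proof (cases "p = (None, Some b)")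
    case True then show ?thesis using Cons by (simp add: fin_run)
  next
    case False
    obtain x y where xy: "p = (x,y)" by (cases p)
    then have "dstep g E3 p = Dead" using False by (cases x; cases y; auto)
    then show ?thesis using Cons False by simp
  qed
qed

lemma e2_run: "foldl (dstep g) E2 t = Fin \<longleftrightarrow> t = [(None, Some a)]"
proof (cases t)
  case Nil then show ?thesis by simp
next
  case (Cons p t')
  then show ?thesis
  proof (cases "p = (None, Some a)")
    case True then show ?thesis using Cons by (simp add: fin_run)
  next
    case False
    obtain x y where xy: "p = (x,y)" by (cases p)
    then have "dstep g E2 p = Dead" using False by (cases x; cases y; auto)
    then show ?thesis using Cons False by simp
  qed
qed

lemma casc_run_fwd: "y \<in> {a,b,c} \<Longrightarrow>
    foldl (dstep g) Casc (diag (cbp k) @ [(Some y, Some c), (None, Some b)]) = Fin"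
proof (induction k)
  case 0 then show ?case by (cases y) auto
next
  case (Suc k) then show ?case by simp
qed

lemma casc_run_bwd:
  "foldl (dstep g) Casc t = Fin \<Longrightarrow> \<exists>k y. t = diag (cbp k) @ [(Some y, Some c), (None, Some b)]"
proof (induction "length t" arbitrary: t rule: less_induct)
  case less
  obtain p t' where t: "t = p # t'" using less.prems by (cases t) auto
  obtain x y where p: "p = (x,y)" by (cases p)
  show ?case
  proof (cases "x = Some c \<and> y = Some c")
    case True
    then have r: "foldl (dstep g) CascC t' = Fin" using less.prems t p by simp
    obtain q t'' where t': "t' = q # t''" using r by (cases t') auto
    obtain x' y' where q: "q = (x',y')" by (cases q)
    show ?thesis
    proof (cases "x' = Some b \<and> y' = Some b")
      case True
      then have "foldl (dstep g) Casc t'' = Fin" using r t' q by simp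
      moreover have "length t'' < length t" using t t' by simp
      ultimately obtain k y0 where "t'' = diag (cbp k) @ [(Some y0, Some c), (None, Some b)]"
        using less.hyps by blast
      then show ?thesis using t t' p q True \<open>x = Some c \<and> y = Some c\<close>
        by (intro exI[of _ "Suc k"] exI[of _ y0]) simp
    next
      case False
      have "x' = None \<and> y' = Some b"
      proof (rule ccontr)
        assume nn: "\<not> (x' = None \<and> y' = Some b)"
        have "dstep g CascC (x',y') = Dead" using False nn
          by (cases x'; cases y'; auto)
        then show False using r t' q by simp
      qed
      then have "t'' = []" using r t' q by (simp add: fin_run split: if_splits)
      then show ?thesis using t t' p q True \<open>x' = None \<and> y' = Some b\<close>
        by (intro exI[of _ 0] exI[of _ c]) simp
    qed
  next
    case False
    show ?thesis
    proof (cases "\<exists>z. x = Some z \<and> z \<noteq> c \<and> y = Some c")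
      case True
      then obtain z where z: "x = Some z" "z \<noteq> c" "y = Some c" by blast
      then have "foldl (dstep g) E3 t' = Fin" using less.prems t p by simp
      then have "t' = [(None, Some b)]" using e3_run by blast
      then show ?thesis using t p z by (intro exI[of _ 0] exI[of _ z]) simp
    next
      case F2: False
      have "dstep g Casc (x,y) = Dead" using False F2
        by (cases x; cases y; auto)
      then show ?thesis using less.prems t p by simp
    qed
  qed
qed

lemma run_diag:
  "irr0 p \<Longrightarrow> foldl (dstep g) (D (last3 p)) (diag w) = (if irr0 (p@w) then D (last3 (p@w)) else Dead)"
proof (induction w arbitrary: p)
  case Nil then show ?case by simp
next
  case (Cons x w)
  show ?case
  proof (cases "last3 p @ [x] \<in> Lh")
    case True
    then have "\<not> irr0 (p@[x])" using irr_snoc by blast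
    then have "\<not> irr0 (p@x#w)" using irr_prefix[of "p@[x]" w] by auto
    then show ?thesis using True by simp
  next
    case False
    then have i: "irr0 (p@[x])" using irr_snoc Cons.prems by blast
    have "dstep g (D (last3 p)) (Some x, Some x) = D (last3 (p@[x]))"
      using False by (simp add: last3_snoc)
    then show ?thesis using Cons.IH[OF i] by simp
  qed
qed

lemma run_diag0: "foldl (dstep g) (D []) (diag w) = (if irr0 w then D (last3 w) else Dead)"
  using run_diag[of "[]" g w] by (simp add: last3_def)

lemma diag_decomp: "\<exists>w rest. s = diag w @ rest \<and> (rest = [] \<or> (\<forall>x. hd rest \<noteq> (Some x, Some x)))"
proof (induction s)
  case Nil then show ?case by (intro exI[of _ "[]"]) simp
next
  case (Cons p s)
  show ?case
  proof (cases "\<exists>x. p = (Some x, Some x)")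
    case True
    then obtain x where x: "p = (Some x, Some x)" by blast
    obtain w rest where "s = diag w @ rest" "rest = [] \<or> (\<forall>x. hd rest \<noteq> (Some x, Some x))"
      using Cons.IH by blast
    then show ?thesis using x by (intro exI[of _ "x#w"] exI[of _ rest]) simp
  next
    case False
    then show ?thesis by (intro exI[of _ "[]"] exI[of _ "p#s"]) auto
  qed
qed


definition Tg :: "letter option \<Rightarrow> letter list" where
  "Tg g = (case g of None \<Rightarrow> [] | Some x \<Rightarrow> [x])"

definition RelP :: "letter option \<Rightarrow> (letter list \<times> letter list) set" where
  "RelP g = {(u,v). irr0 u \<and> irr0 v \<and> (u @ Tg g, v) \<in> congr R0}"

lemma deltaR_Cons2: "deltaR (x#u) (y#v) = (Some x, Some y) # deltaR u v"
  by (simp add: deltaR_def Let_def)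

lemma deltaR_shapeC: "deltaR (w' @ cbp k @ [c,b,y]) (w' @ [c,a] @ cbp (Suc k)) =
   diag (w'@[c]) @ [(Some b, Some a)] @ diag (cbp k) @ [(Some y, Some c), (None, Some b)]"
proof -
  have 1: "cbp k @ [c,b,y] = c # b # (cbp k @ [y])" using cbp_comm[of k] by (metis append.assoc append_Cons append_Nil)
  have 2: "[c,a] @ cbp (Suc k) = c # a # (cbp k @ [c,b])" using cbp_comm[of k] by simp
  have 3: "deltaR (cbp k @ [y]) (cbp k @ [c,b]) = diag (cbp k) @ [(Some y, Some c), (None, Some b)]"
    using deltaR_prefix[of "cbp k" "[y]" "[c,b]"] by (simp add: deltaR_def)
  show ?thesis unfolding 1 deltaR_prefix 2 by (simp add: deltaR_Cons2 3)
qed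

lemma last3_suffix: "last3 w = L0 @ X \<Longrightarrow> \<exists>w0. w = w0 @ X"
proof -
  assume H: "last3 w = L0 @ X"
  have "w = take (length w - 3) w @ last3 w" by (simp add: last3_def)
  then show ?thesis using H by (metis append.assoc)
qed

lemma last3_ends:
  assumes "length (last3 w) = 3"
  shows "\<exists>x1 x2 x3. last3 w = [x1,x2,x3]"
proof -
  obtain x1 r where "last3 w = x1 # r" using assms by (cases "last3 w") auto
  moreover obtain x2 r' where "r = x2 # r'" using assms calculation by (cases r) auto
  moreover obtain x3 r'' where "r' = x3 # r''" using assms calculation by (cases r') auto
  ultimately show ?thesis using assms by auto
qed

lemma Lh_b_end: "last3 u @ [b] \<in> Lh \<Longrightarrow> \<exists>p y. last3 u = [c,p,y] \<and> p \<noteq> c \<and> y \<noteq> c"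
proof -
  assume H: "last3 u @ [b] \<in> Lh"
  then have "length (last3 u) = 3" using Lh_len by fastforce
  then obtain x1 x2 x3 where "last3 u = [x1,x2,x3]" using last3_ends by blast
  then show ?thesis using H unfolding Lh_explicit by auto
qed

lemma Lh_a_end: "last3 u @ [a] \<in> Lh \<Longrightarrow> (\<exists>y. last3 u = [c,a,y] \<and> y \<noteq> c) \<or> (\<exists>y. last3 u = [c,b,y])"
proof -
  assume H: "last3 u @ [a] \<in> Lh"
  then have "length (last3 u) = 3" using Lh_len by fastforce
  then obtain x1 x2 x3 where "last3 u = [x1,x2,x3]" using last3_ends by blast
  then show ?thesis using H unfolding Lh_explicit by auto
qed

lemma run_app: "foldl (dstep g) q (s1 @ s2) = foldl (dstep g) (foldl (dstep g) q s1) s2"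
  by simp

lemma last3_app2': "\<exists>L0. last3 (p@[x,y]) = L0 @ [x,y]"
  using last3_app2[of p x y] by (cases "p = []") auto

lemma last3_app1: "\<exists>L0. last3 (p@[x]) = L0 @ [x]"
  unfolding last3_def by (cases "length p \<le> 2") (auto simp: drop_append)

lemma rel_eq: "(w,N) \<in> (rstep R0)\<^sup>* \<Longrightarrow> irr0 N \<Longrightarrow> (w,v) \<in> congr R0 \<Longrightarrow> irr0 v \<Longrightarrow> v = N"
  using rel_char by blast

lemma fwd:
  assumes uv: "(u,v) \<in> RelP g"
  shows "foldl (dstep g) (D []) (deltaR u v) \<in> Fs g"
proof -
  have iu: "irr0 u" and iv: "irr0 v" and cg: "(u @ Tg g, v) \<in> congr R0" using uv by (auto simp: RelP_def)
  have ru: "foldl (dstep g) (D []) (diag u) = D (last3 u)" by (simp only: run_diag0 iu if_True)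
  show ?thesis
  proof (cases g)
    case None
    then have "v = u" using irr_congr_eq[OF cg] iu iv by (simp add: Tg_def)
    then show ?thesis using ru None by (simp add: deltaR_same Fs_def)
  next
    case (Some z)
    show ?thesis
    proof (cases "irr0 (u@[z])")
      case True
      have "(u@[z], v) \<in> congr R0" using cg Some by (simp add: Tg_def)
      then have "v = u@[z]" using rel_eq[of "u@[z]" "u@[z]" v] iv True by simp
      then have s: "deltaR u v = diag u @ [(None, Some z)]"
        using deltaR_prefix[of u "[]" "[z]"] by (simp add: deltaR_def)
      have "last3 u @ [z] \<notin> Lh" using True irr_snoc by blast
      have "foldl (dstep g) (D []) (deltaR u v) = dstep g (D (last3 u)) (None, Some z)"
        using s ru by (simp only: foldl_append foldl_Cons foldl_Nil)
      then show ?thesis using \<open>last3 u @ [z] \<notin> Lh\<close> Some by (simp add: Fs_def)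
    next
      case False
      then have L: "last3 u @ [z] \<in> Lh" using irr_snoc iu by blast
      then have zc: "z \<noteq> c" using Lh_last by fastforce
      show ?thesis
      proof (cases z)
        case c then show ?thesis using zc by simp
      next
        case b
        obtain p y where py: "last3 u = [c,p,y]" "p \<noteq> c" "y \<noteq> c" using Lh_b_end L b by blast
        obtain w0 where w0: "u = w0 @ [c,p,y]" using last3_suffix[of u "[]"] py by auto
        have rl: "([c,p,y,b],[c,p,c,b]) \<in> R0" using py by (cases p; cases y; simp add: R0_def)
        have st: "(u@[b], w0@[c,p,c,b]) \<in> (rstep R0)\<^sup>*" using R0_rt[OF rl, of w0 "[]"] w0 by simp
        have i1: "irr0 (w0@[c,p])" using iu w0 irr_prefix[of "w0@[c,p]" "[y]"] by simp
        have iN: "irr0 (w0@[c,p,c,b])" using irr_app_cb[OF i1] by simp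
        have "(u@[b], v) \<in> congr R0" using cg Some b by (simp add: Tg_def)
        then have "v = w0@[c,p,c,b]" using rel_eq[OF st iN] iv by blast
        then have s: "deltaR u v = diag (w0@[c,p]) @ [(Some y, Some c), (None, Some b)]"
          using w0 deltaR_prefix[of "w0@[c,p]" "[y]" "[c,b]"] by (simp add: deltaR_def)
        have r1: "foldl (dstep g) (D []) (diag (w0@[c,p])) = D (last3 (w0@[c,p]))"
          by (simp only: run_diag0 i1 if_True)
        obtain L0 where L0: "last3 (w0@[c,p]) = L0 @ [c,p]" using last3_app2' by blast
        have "dstep g (D (last3 (w0@[c,p]))) (Some y, Some c) = E3"
          using L0 py Some b by auto
        moreover have "foldl (dstep g) (D []) (deltaR u v) =
           foldl (dstep g) (D (last3 (w0@[c,p]))) [(Some y, Some c), (None, Some b)]"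
          using s r1 by (simp only: foldl_append)
        ultimately show ?thesis using Some b by (simp add: Fs_def)
      next
        case a
        from Lh_a_end[of u] L a
        consider (B) y where "last3 u = [c,a,y]" "y \<noteq> c" | (C) y where "last3 u = [c,b,y]" by blast
        then show ?thesis
        proof cases
          case B
          obtain w0 where w0: "u = w0 @ [c,a,y]" using last3_suffix[of u "[]"] B by auto
          have rl: "([c,a,y,a],[c,a,c,a]) \<in> R0" using B by (cases y; simp add: R0_def)
          have st: "(u@[a], w0@[c,a,c,a]) \<in> (rstep R0)\<^sup>*" using R0_rt[OF rl, of w0 "[]"] w0 by simp
          have i1: "irr0 (w0@[c,a])" using iu w0 irr_prefix[of "w0@[c,a]" "[y]"] by simp
          have "\<not> ends_cb (w0@[c,a])" by (simp add: ends_cb_def)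
          then have iN: "irr0 (w0@[c,a,c,a])" using irr_app_ca[OF i1] by simp
          have "(u@[a], v) \<in> congr R0" using cg Some a by (simp add: Tg_def)
          then have "v = w0@[c,a,c,a]" using rel_eq[OF st iN] iv by blast
          then have s: "deltaR u v = diag (w0@[c,a]) @ [(Some y, Some c), (None, Some a)]"
            using w0 deltaR_prefix[of "w0@[c,a]" "[y]" "[c,a]"] by (simp add: deltaR_def)
          have r1: "foldl (dstep g) (D []) (diag (w0@[c,a])) = D (last3 (w0@[c,a]))"
            by (simp only: run_diag0 i1 if_True)
          obtain L0 where L0: "last3 (w0@[c,a]) = L0 @ [c,a]" using last3_app2' by blast
          have "dstep g (D (last3 (w0@[c,a]))) (Some y, Some c) = E2"
            using L0 B Some a by auto
          moreover have "foldl (dstep g) (D []) (deltaR u v) =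
             foldl (dstep g) (D (last3 (w0@[c,a]))) [(Some y, Some c), (None, Some a)]"
            using s r1 by (simp only: foldl_append)
          ultimately show ?thesis using Some a by (simp add: Fs_def)
        next
          case C
          obtain w1 where w1: "u = w1 @ [c,b,y]" using last3_suffix[of u "[]"] C by auto
          obtain w' k where wk: "w1 = w' @ cbp k" "\<not> ends_cb w'" using ends_cb_decomp by blast
          have u': "u = w' @ cbp k @ [c,b,y]" using w1 wk by simp
          have y3: "y \<in> {a,b,c}" by (cases y) auto
          have st: "(u@[a], w' @ [c,a] @ cbp (Suc k)) \<in> (rstep R0)\<^sup>*" using nfA_C[OF y3] u' by simp
          have u'': "u = (w' @ [c]) @ [b] @ cbp k @ [y]"
            using u' cbp_comm[of k] by (metis append.assoc append_Cons append_Nil)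
          have iw': "irr0 (w'@[c])" using iu u'' irr_prefix by blast
          have iw: "irr0 w'" using irr_prefix[of w' "[c]"] iw' by simp
          have iN: "irr0 (w' @ [c,a] @ cbp (Suc k))" by (rule irr_C_res[OF iw wk(2)])
          have "(u@[a], v) \<in> congr R0" using cg Some a by (simp add: Tg_def)
          then have "v = w' @ [c,a] @ cbp (Suc k)" using rel_eq[OF st iN] iv by blast
          then have s: "deltaR u v = diag (w'@[c]) @ [(Some b, Some a)] @ diag (cbp k) @ [(Some y, Some c), (None, Some b)]"
            using u' deltaR_shapeC by simp
          have r1: "foldl (dstep g) (D []) (diag (w'@[c])) = D (last3 (w'@[c]))"
            by (simp only: run_diag0 iw' if_True)
          obtain L0 where L0: "last3 (w'@[c]) = L0 @ [c]" using last3_app1 by blast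
          have ne: "last3 (w'@[c]) \<noteq> [c,b,c]"
          proof
            assume "last3 (w'@[c]) = [c,b,c]"
            then obtain w0 where "w'@[c] = w0 @ [c,b,c]" using last3_suffix[of "w'@[c]" "[]"] by auto
            then have "w' = w0 @ [c,b]" by simp
            then show False using wk(2) by (simp add: ends_cb_def)
          qed
          have "dstep g (D (last3 (w'@[c]))) (Some b, Some a) = Casc"
            using L0 ne Some a by auto
          moreover have "foldl (dstep g) (D []) (deltaR u v) =
            foldl (dstep g) (dstep g (D (last3 (w'@[c]))) (Some b, Some a)) (diag (cbp k) @ [(Some y, Some c), (None, Some b)])"
            using s r1 by (simp only: foldl_append foldl_Cons foldl_Nil)
          ultimately have "foldl (dstep g) (D []) (deltaR u v) =
            foldl (dstep g) Casc (diag (cbp k) @ [(Some y, Some c), (None, Some b)])" by simp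
          then show ?thesis using casc_run_fwd[OF y3] Some a by (simp add: Fs_def)
        qed
      qed
    qed
  qed
qed


lemma nondiag_step:
  assumes nd: "\<forall>x. p \<noteq> (Some x, Some x)"
  shows "dstep g (D L) p = Dead \<or>
    (\<exists>z. p = (None, Some z) \<and> g = Some z \<and> L@[z] \<notin> Lh \<and> dstep g (D L) p = Fin) \<or>
    (g = Some a \<and> p = (Some b, Some a) \<and> (\<exists>L0. L = L0@[c]) \<and> L \<noteq> [c,b,c] \<and> dstep g (D L) p = Casc) \<or>
    (\<exists>x. g = Some a \<and> p = (Some x, Some c) \<and> x \<noteq> c \<and> (\<exists>L0. L = L0@[c,a]) \<and> dstep g (D L) p = E2) \<or>
    (\<exists>x. g = Some b \<and> p = (Some x, Some c) \<and> x \<noteq> c \<and> (\<exists>L0 q. L = L0@[c,q] \<and> q \<noteq> c) \<and> dstep g (D L) p = E3)"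
proof -
  obtain x y where p: "p = (x,y)" by (cases p)
  show ?thesis
  proof (cases x)
    case None
    then show ?thesis using p by (cases y) auto
  next
    case (Some x')
    show ?thesis
    proof (cases y)
      case None then show ?thesis using p Some by simp
    next
      case (Some y')
      then have "x' \<noteq> y'" using nd p \<open>x = Some x'\<close> by auto
      then show ?thesis using p Some \<open>x = Some x'\<close> by auto
    qed
  qed
qed

lemma bwd:
  assumes acc: "foldl (dstep g) (D []) s \<in> Fs g"
  shows "s \<in> (\<lambda>(u,v). deltaR u v) ` RelP g"
proof -
  obtain w rest where wr: "s = diag w @ rest" "rest = [] \<or> (\<forall>x. hd rest \<noteq> (Some x, Some x))"
    using diag_decomp by blast
  have iw: "irr0 w"
  proof (rule ccontr)
    assume "\<not> irr0 w"
    then have "foldl (dstep g) (D []) s = Dead" using wr(1) run_diag0[of g w] by simp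
    then show False using acc by (auto simp: Fs_def split: if_splits)
  qed
  have run: "foldl (dstep g) (D []) s = foldl (dstep g) (D (last3 w)) rest"
    using wr(1) by (simp only: foldl_append run_diag0 iw if_True)
  show ?thesis
  proof (cases rest)
    case Nil
    then have "g = None" using acc run by (auto simp: Fs_def split: if_splits)
    then have "(w,w) \<in> RelP g" using iw by (simp add: RelP_def Tg_def)
    moreover have "s = deltaR w w" using wr Nil by (simp add: deltaR_same)
    ultimately show ?thesis by force
  next
    case (Cons p t)
    then have nd: "\<forall>x. p \<noteq> (Some x, Some x)" using wr(2) by simp
    have accr: "foldl (dstep g) (dstep g (D (last3 w)) p) t \<in> Fs g" using acc run Cons by simp
    from nondiag_step[OF nd, of g "last3 w"]
    consider (Dd) "dstep g (D (last3 w)) p = Dead"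
      | (Fn) z where "p = (None, Some z)" "g = Some z" "last3 w @ [z] \<notin> Lh" "dstep g (D (last3 w)) p = Fin"
      | (Cs) "g = Some a" "p = (Some b, Some a)" "\<exists>L0. last3 w = L0@[c]" "last3 w \<noteq> [c,b,c]"
           "dstep g (D (last3 w)) p = Casc"
      | (Ea) x where "g = Some a" "p = (Some x, Some c)" "x \<noteq> c" "\<exists>L0. last3 w = L0@[c,a]"
           "dstep g (D (last3 w)) p = E2"
      | (Eb) x where "g = Some b" "p = (Some x, Some c)" "x \<noteq> c" "\<exists>L0 q. last3 w = L0@[c,q] \<and> q \<noteq> c"
           "dstep g (D (last3 w)) p = E3"
      by blast
    then show ?thesis
    proof cases
      case Dd then show ?thesis using accr by (auto simp: Fs_def split: if_splits)
    next
      case Fn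
      then have "t = []" using accr by (simp add: Fs_def fin_run split: if_splits)
      have i2: "irr0 (w@[z])" using irr_snoc iw Fn(3) by blast
      have "(w, w@[z]) \<in> RelP g" using iw i2 Fn(2) by (simp add: RelP_def Tg_def)
      moreover have "s = deltaR w (w@[z])"
        using wr(1) Cons \<open>t = []\<close> Fn(1) deltaR_prefix[of w "[]" "[z]"] by (simp add: deltaR_def)
      ultimately show ?thesis by force
    next
      case Cs
      then have "foldl (dstep g) Casc t = Fin" using accr by (simp add: Fs_def)
      then obtain k y where t: "t = diag (cbp k) @ [(Some y, Some c), (None, Some b)]"
        using casc_run_bwd by blast
      obtain w' where w': "w = w' @ [c]" using Cs(3) last3_suffix by blast
      have ne: "\<not> ends_cb w'"
      proof
        assume "ends_cb w'"
        then obtain q where "w' = q @ [c,b]" unfolding ends_cb_def by blast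
        then have "last3 w = [c,b,c]" using w' by (simp add: last3_def)
        then show False using Cs(4) by simp
      qed
      have iw': "irr0 w'" using irr_prefix iw w' by blast
      define u where "u = w' @ cbp k @ [c,b,y]"
      define v where "v = w' @ [c,a] @ cbp (Suc k)"
      have y3: "y \<in> {a,b,c}" by (cases y) auto
      have iu: "irr0 u" unfolding u_def by (rule irr_C_src[OF iw'])
      have iv: "irr0 v" unfolding v_def by (rule irr_C_res[OF iw' ne])
      have "(u@[a], v) \<in> congr R0" using nfA_C[OF y3, of w' k] rtrancl_congr unfolding u_def v_def by simp
      then have "(u,v) \<in> RelP g" using iu iv Cs(1) by (simp add: RelP_def Tg_def)
      moreover have "s = deltaR u v"
        using wr(1) Cons t w' Cs(2) deltaR_shapeC[of w' k y] unfolding u_def v_def by simp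
      ultimately show ?thesis by force
    next
      case Ea
      then have "foldl (dstep g) E2 t = Fin" using accr by (simp add: Fs_def)
      then have t: "t = [(None, Some a)]" using e2_run by blast
      obtain w0 where w0: "w = w0 @ [c,a]" using Ea(4) last3_suffix by blast
      define u where "u = w0 @ [c,a,x]"
      define v where "v = w0 @ [c,a,c,a]"
      have iu: "irr0 u" using irr_app_y[of w0 a x] iw w0 unfolding u_def by simp
      have "\<not> ends_cb w" using w0 by (simp add: ends_cb_def)
      then have iv: "irr0 v" using irr_app_ca[OF iw] w0 unfolding v_def by simp
      have rl: "([c,a,x,a],[c,a,c,a]) \<in> R0" using Ea(3) by (cases x; simp add: R0_def)
      have "(u@[a], v) \<in> congr R0" using rule_congr[OF rl, of w0 "[]"] unfolding u_def v_def by simp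
      then have "(u,v) \<in> RelP g" using iu iv Ea(1) by (simp add: RelP_def Tg_def)
      moreover have "s = deltaR u v"
        using wr(1) Cons t w0 Ea(2) deltaR_prefix[of "w0@[c,a]" "[x]" "[c,a]"]
        unfolding u_def v_def by (simp add: deltaR_def)
      ultimately show ?thesis by force
    next
      case Eb
      then have "foldl (dstep g) E3 t = Fin" using accr by (simp add: Fs_def)
      then have t: "t = [(None, Some b)]" using e3_run by blast
      obtain L0 q where Lq: "last3 w = L0@[c,q]" "q \<noteq> c" using Eb(4) by blast
      obtain w0 where w0: "w = w0 @ [c,q]" using Lq(1) last3_suffix by blast
      define u where "u = w0 @ [c,q,x]"
      define v where "v = w0 @ [c,q,c,b]"
      have iu: "irr0 u" using irr_app_y[of w0 q x] iw w0 unfolding u_def by simp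
      have iv: "irr0 v" using irr_app_cb[OF iw] w0 unfolding v_def by simp
      have rl: "([c,q,x,b],[c,q,c,b]) \<in> R0" using Eb(3) Lq(2) by (cases x; cases q; simp add: R0_def)
      have "(u@[b], v) \<in> congr R0" using rule_congr[OF rl, of w0 "[]"] unfolding u_def v_def by simp
      then have "(u,v) \<in> RelP g" using iu iv Eb(1) by (simp add: RelP_def Tg_def)
      moreover have "s = deltaR u v"
        using wr(1) Cons t w0 Eb(2) deltaR_prefix[of "w0@[c,q]" "[x]" "[c,b]"]
        unfolding u_def v_def by (simp add: deltaR_def)
      ultimately show ?thesis by force
    qed
  qed
qed

theorem lang_eq: "(\<lambda>(u,v). deltaR u v) ` RelP g = {s. foldl (dstep g) (D []) s \<in> Fs g}"
proof (rule set_eqI)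
  fix s
  show "s \<in> (\<lambda>(u,v). deltaR u v) ` RelP g \<longleftrightarrow> s \<in> {s. foldl (dstep g) (D []) s \<in> Fs g}"
  proof
    assume "s \<in> (\<lambda>(u,v). deltaR u v) ` RelP g"
    then obtain u v where "(u,v) \<in> RelP g" "s = deltaR u v" by auto
    then show "s \<in> {s. foldl (dstep g) (D []) s \<in> Fs g}" using fwd by simp
  next
    assume "s \<in> {s. foldl (dstep g) (D []) s \<in> Fs g}"
    then show "s \<in> (\<lambda>(u,v). deltaR u v) ` RelP g" using bwd by simp
  qed
qed


lemma UNIV_letter: "(UNIV :: letter set) = {a,b,c}"
  by (auto intro: letter.exhaust)

lemma finite_short: "finite {L :: letter list. length L \<le> 3}"
proof -
  have "finite {xs :: letter list. set xs \<subseteq> UNIV \<and> length xs \<le> 3}"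
    by (rule finite_lists_length_le) (simp add: UNIV_letter)
  then show ?thesis by simp
qed

definition Qd :: "st2 set" where
  "Qd = D ` {L. length L \<le> 3} \<union> {Casc, CascC, E2, E3, Fin, Dead}"

lemma D_last3_Qd[simp]: "D (last3 L) \<in> Qd"
  unfolding Qd_def using last3_len by blast

lemma consts_Qd[simp]: "Casc \<in> Qd" "CascC \<in> Qd" "E2 \<in> Qd" "E3 \<in> Qd" "Fin \<in> Qd" "Dead \<in> Qd"
  unfolding Qd_def by auto

lemma if_Qd: "B \<in> Qd \<Longrightarrow> C \<in> Qd \<Longrightarrow> (if A then B else C) \<in> Qd"
  by simp

lemma dstep_Qd: "dstep g q p \<in> Qd"
proof -
  obtain x y where p: "p = (x,y)" by (cases p)
  show ?thesis
  proof (cases q)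
    case (D L)
    show ?thesis unfolding D p
      by (cases x; cases y; simp only: dstep.simps; (intro if_Qd)?; simp only: D_last3_Qd consts_Qd)
  qed (cases x; cases y; simp only: p dstep.simps; (intro if_Qd)?; simp only: D_last3_Qd consts_Qd)+
qed

lemma reg_rel: "regular ((\<lambda>(u,v). deltaR u v) ` RelP g)"
  unfolding lang_eq
proof (rule regular_gen[of Qd])
  show "finite Qd" unfolding Qd_def using finite_short by simp
  show "D [] \<in> Qd" unfolding Qd_def by auto
  show "\<forall>q\<in>Qd. \<forall>s. dstep g q s \<in> Qd" using dstep_Qd by blast
qed

fun nst :: "letter list option \<Rightarrow> letter \<Rightarrow> letter list option" where
  "nst None x = None"
| "nst (Some L) x = (if L@[x] \<in> Lh then None else Some (last3 (L@[x])))"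

lemma nst_none[simp]: "foldl nst None w = None"
  by (induction w) auto

lemma run_nst: "irr0 p \<Longrightarrow> foldl nst (Some (last3 p)) w = (if irr0 (p@w) then Some (last3 (p@w)) else None)"
proof (induction w arbitrary: p)
  case Nil then show ?case by simp
next
  case (Cons x w)
  show ?case
  proof (cases "last3 p @ [x] \<in> Lh")
    case True
    then have "\<not> irr0 (p@[x])" using irr_snoc by blast
    then have "\<not> irr0 (p@x#w)" using irr_prefix[of "p@[x]" w] by auto
    then show ?thesis using True by simp
  next
    case False
    then have i: "irr0 (p@[x])" using irr_snoc Cons.prems by blast
    have "nst (Some (last3 p)) x = Some (last3 (p@[x]))"
      using False by (simp add: last3_snoc)
    then show ?thesis using Cons.IH[OF i] by simp
  qed
qed

lemma reg_nf: "regular {w. irr0 w}"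
proof -
  have eq: "{w. irr0 w} = {w. foldl nst (Some []) w \<in> range Some}"
    using run_nst[of "[]"] by (auto simp: last3_def)
  show ?thesis unfolding eq
  proof (rule regular_gen[of "insert None (Some ` {L. length L \<le> 3})"])
    show "finite (insert None (Some ` {L :: letter list. length L \<le> 3}))" using finite_short by simp
    show "Some [] \<in> insert None (Some ` {L :: letter list. length L \<le> 3})" by simp
    show "\<forall>q\<in>insert None (Some ` {L. length L \<le> 3}). \<forall>s. nst q s \<in> insert None (Some ` {L. length L \<le> 3})"
      using last3_len by auto
  qed
qed

definition encp :: "letter option \<times> letter option \<Rightarrow> nat option \<times> nat option" where
  "encp = map_prod (map_option enc) (map_option enc)"

lemma inj_enc: "inj enc"
proof (rule injI)
  fix x y assume "enc x = enc y"
  then have "dec (enc x) = dec (enc y)" by simp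
  then show "x = y" by simp
qed

lemma inj_mo: "map_option enc x = map_option enc y \<Longrightarrow> x = y"
proof (cases x; cases y)
  fix x' y' assume "map_option enc x = map_option enc y" "x = Some x'" "y = Some y'"
  then have "enc x' = enc y'" by simp
  then have "dec (enc x') = dec (enc y')" by simp
  then show "x = y" using \<open>x = Some x'\<close> \<open>y = Some y'\<close> by simp
qed auto

lemma inj_encp: "inj encp"
proof (rule injI)
  fix p q assume H: "encp p = encp q"
  obtain p1 p2 where p: "p = (p1,p2)" by (cases p)
  obtain q1 q2 where q: "q = (q1,q2)" by (cases q)
  have "map_option enc p1 = map_option enc q1" "map_option enc p2 = map_option enc q2"
    using H p q by (auto simp: encp_def)
  then show "p = q" using p q inj_mo by blast
qed

lemma deltaR_map: "deltaR (map enc u) (map enc v) = map encp (deltaR u v)"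
proof (rule nth_equalityI)
  show "length (deltaR (map enc u) (map enc v)) = length (map encp (deltaR u v))"
    by (simp add: deltaR_len)
next
  fix j assume "j < length (deltaR (map enc u) (map enc v))"
  then have j: "j < max (length u) (length v)" "j < max (length (map enc u)) (length (map enc v))"
    by (auto simp: deltaR_len)
  show "deltaR (map enc u) (map enc v) ! j = map encp (deltaR u v) ! j"
    using deltaR_nth[OF j(1)] deltaR_nth[OF j(2)] j(1) by (simp add: encp_def deltaR_len)
qed

definition Lnat :: "nat list set" where "Lnat = map enc ` {w. irr0 w}"
definition phin :: "nat \<Rightarrow> letter list" where "phin n = [dec n]"

lemma ev_phin: "ev phin (map enc w) = w"
  unfolding phin_def ev_dec by simp

lemma Lright_eq:
  assumes "g \<in> insert None (Some ` Xn)"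
  shows "Lright R0 phin Lnat g = (\<lambda>(u,v). (map enc u, map enc v)) ` RelP (map_option dec g)"
proof -
  have T: "(case g of None \<Rightarrow> [] | Some h \<Rightarrow> phin h) = Tg (map_option dec g)"
    by (cases g) (auto simp: phin_def Tg_def)
  show ?thesis
  proof (rule set_eqI)
    fix p :: "nat list \<times> nat list"
    obtain u v where p: "p = (u,v)" by (cases p)
    show "p \<in> Lright R0 phin Lnat g \<longleftrightarrow> p \<in> (\<lambda>(u,v). (map enc u, map enc v)) ` RelP (map_option dec g)"
    proof
      assume "p \<in> Lright R0 phin Lnat g"
      then have H: "u \<in> Lnat" "v \<in> Lnat"
        "(ev phin u @ (case g of None \<Rightarrow> [] | Some h \<Rightarrow> phin h), ev phin v) \<in> congr R0"
        using p by (auto simp: Lright_def)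
      obtain u' where u': "u = map enc u'" "irr0 u'" using H(1) by (auto simp: Lnat_def)
      obtain v' where v': "v = map enc v'" "irr0 v'" using H(2) by (auto simp: Lnat_def)
      have "(u',v') \<in> RelP (map_option dec g)" using H(3) u' v' T by (simp add: RelP_def ev_phin)
      then show "p \<in> (\<lambda>(u,v). (map enc u, map enc v)) ` RelP (map_option dec g)"
        using p u' v' by force
    next
      assume "p \<in> (\<lambda>(u,v). (map enc u, map enc v)) ` RelP (map_option dec g)"
      then obtain u' v' where uv: "(u',v') \<in> RelP (map_option dec g)" "u = map enc u'" "v = map enc v'"
        using p by auto
      then show "p \<in> Lright R0 phin Lnat g" using p T
        by (auto simp: Lright_def RelP_def Lnat_def ev_phin)
    qed
  qed
qed

theorem automatic_R0: "automatic (UNIV :: letter set) R0"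
  unfolding automatic_def
proof (intro exI[of _ Xn] exI[of _ phin] exI[of _ Lnat] conjI ballI)
  show "lang_ok UNIV R0 Xn phin Lnat"
    unfolding lang_ok_def
  proof (intro conjI ballI)
    show "finite Xn" by (simp add: Xn_def)
    show "Lnat \<subseteq> lists Xn" unfolding Lnat_def by auto
    show "regular Lnat" unfolding Lnat_def by (rule regular_image[OF reg_nf inj_enc])
  next
    fix h assume "h \<in> Xn" then show "phin h \<in> lists UNIV" by simp
  next
    fix w :: "letter list" assume "w \<in> lists UNIV"
    obtain n where n: "(w,n) \<in> (rstep R0)\<^sup>*" "irr0 n" using ex_nf by blast
    have "map enc n \<in> Lnat" using n(2) by (simp add: Lnat_def)
    moreover have "(ev phin (map enc n), w) \<in> congr R0"
      using congr_sym[OF rtrancl_congr[OF n(1)]] by (simp add: ev_phin)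
    ultimately show "\<exists>u\<in>Lnat. (ev phin u, w) \<in> congr R0" by blast
  qed
next
  fix g assume g: "g \<in> insert None (Some ` Xn)"
  have "(\<lambda>(u, v). deltaR u v) ` Lright R0 phin Lnat g =
        map encp ` ((\<lambda>(u,v). deltaR u v) ` RelP (map_option dec g))"
    unfolding Lright_eq[OF g] image_image by (intro image_cong refl) (auto simp: deltaR_map)
  then show "regular ((\<lambda>(u, v). deltaR u v) ` Lright R0 phin Lnat g)"
    using regular_image[OF reg_rel inj_encp] by simp
qed


theorem mainTheorem4:
  shows "complete_srs R0 \<and> FCRS (UNIV :: letter set) R0 \<and> FDT (UNIV :: letter set) R0 \<and>
         automatic (UNIV :: letter set) R0 \<and> \<not> biautomatic (UNIV :: letter set) R0"
  using complete_R0 FCRS_R0 FDT_R0 automatic_R0 not_biaut by blast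

end
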